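(* Let $\lambda,\mu\in DP$ with $D_\mu\subseteq D_\lambda$ and let $\nu=c(T_{\lambda/\mu})$. Then $$f^\lambda_{\mu\nu}=\prod_{i=1}^{\ell(\nu)}2^{comp(P_i(\lambda/\mu))-1}.$$
   Context: $DP$: partitions with distinct parts (including $\emptyset$). Shifted diagram $D_\lambda=\{(i,j):1\le i\le\ell(\lambda),\ i\le j\le i+\lambda_i-1\}$; $D_{\lambda/\mu}=D_\lambda\setminus D_\mu$. Alphabet $\mathcal A=\{1'<1<2'<2<\cdots\}$. A tableau of shape $D$ is $T:D\to\mathcal A$, weakly increasing along rows and down columns, each unmarked $k$ at most once per column, each marked $k'$ at most once per row; content $c(T)=(c_1,c_2,\dots)$, $c_i$ = number of entries $i$ or $i'$ (trailing zeros omitted). Reading word $w=w_1\cdots w_n$: rows read left to right, from the bottom row to the top row. $m_i(0)=0$; for $1\le j\le n$, $m_i(j)$ = number of letters $i$ in $w_{n-j+1}\cdots w_n$; for $n<j\le2n$, $m_i(j)=m_i(n)+$ number of letters $i'$ in $w_1\cdots w_{j-n}$. For $k>1$, $w$ is $k$-amenable if (a) for $0\le j\le n-1$, $m_k(j)=m_{k-1}(j)$ implies $w_{n-j}\notin\{k,k'\}$; (b) for $n\le j\le2n-1$, $m_k(j)=m_{k-1}(j)$ implies $w_{j-n+1}\notin\{k-1,k'\}$; (c) the first letter of $w$ in $\{k',k\}$ (if any) is $k$; (d) the first letter of $w$ in $\{(k-1)',k-1\}$ (if any) is $k-1$. $T$ is amenable if $w(T)$ is $k$-amenable for all $k>1$.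 $f^\lambda_{\mu\nu}$ is the number of amenable tableaux of shape $D_{\lambda/\mu}$ with content $\nu$ (these are the coefficients in $Q_{\lambda/\mu}=\sum_\nu f^\lambda_{\mu\nu}Q_\nu$). $T_{\lambda/\mu}$ and $P_k(\lambda/\mu)$: $U_1=D_{\lambda/\mu}$; $P_k=\{(x,y)\in U_k:(x-1,y-1)\notin U_k\}$; on $P_k$ put $k'$ in $(x,y)$ if $(x+1,y)\in P_k$, else $k$; $U_{k+1}=U_k\setminus P_k$. $comp(D)$ is the number of edgewise connected components of $D$. *)

theory Defs
  imports Main
begin

text \<open>A partition with distinct parts is a strictly decreasing list of positive naturals
  (the empty list is the empty partition). Cells are pairs (row, column), 1-indexed.\<close>

definition DP :: "nat list \<Rightarrow> bool" where
  "DP lam \<longleftrightarrow> sorted_wrt (>) lam \<and> 0 \<notin> set lam"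

definition shifted_diagram :: "nat list \<Rightarrow> (nat \<times> nat) set" where
  "shifted_diagram lam =
     {(i, j). 1 \<le> i \<and> i \<le> length lam \<and> i \<le> j \<and> j + 1 \<le> i + lam ! (i - 1)}"

definition skew_diagram :: "nat list \<Rightarrow> nat list \<Rightarrow> (nat \<times> nat) set" where
  "skew_diagram lam mu = shifted_diagram lam - shifted_diagram mu"

text \<open>A letter is a pair (k, marked): (k, True) is k', (k, False) is k.
  Order 1' < 1 < 2' < 2 < ... is given by the rank 2k-1 for k', 2k for k.\<close>

type_synonym letter = "nat \<times> bool"

definition rank :: "letter \<Rightarrow> nat" where
  "rank a = 2 * fst a - (if snd a then 1 else 0)"

definition tableau :: "(nat \<times> nat) set \<Rightarrow> ((nat \<times> nat) \<Rightarrow> letter) \<Rightarrow> bool" where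
  "tableau D T \<longleftrightarrow>
     (\<forall>c\<in>D. fst (T c) \<ge> 1) \<and>
     (\<forall>i j j'. (i, j) \<in> D \<longrightarrow> (i, j') \<in> D \<longrightarrow> j \<le> j' \<longrightarrow> rank (T (i, j)) \<le> rank (T (i, j'))) \<and>
     (\<forall>i i' j. (i, j) \<in> D \<longrightarrow> (i', j) \<in> D \<longrightarrow> i \<le> i' \<longrightarrow> rank (T (i, j)) \<le> rank (T (i', j))) \<and>
     (\<forall>i i' j. (i, j) \<in> D \<longrightarrow> (i', j) \<in> D \<longrightarrow> i \<noteq> i' \<longrightarrow> T (i, j) = T (i', j) \<longrightarrow> snd (T (i, j))) \<and>
     (\<forall>i j j'. (i, j) \<in> D \<longrightarrow> (i, j') \<in> D \<longrightarrow> j \<noteq> j' \<longrightarrow> T (i, j) = T (i, j') \<longrightarrow> \<not> snd (T (i, j)))"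

text \<open>Content (c_1, c_2, ..., c_m) with m the largest entry, so no trailing zeros.\<close>

definition content :: "(nat \<times> nat) set \<Rightarrow> ((nat \<times> nat) \<Rightarrow> letter) \<Rightarrow> nat list" where
  "content D T =
     (let m = (if D = {} then 0 else Max ((\<lambda>c. fst (T c)) ` D))
      in map (\<lambda>i. card {c\<in>D. fst (T c) = i}) [1..<m + 1])"

text \<open>Rows read left to right, from the bottom row to the top row.\<close>

definition reading_word :: "(nat \<times> nat) set \<Rightarrow> ((nat \<times> nat) \<Rightarrow> letter) \<Rightarrow> letter list" where
  "reading_word D T =
     concat (map (\<lambda>i. map (\<lambda>j. T (i, j)) (sorted_list_of_set {j. (i, j) \<in> D}))
                 (rev (sorted_list_of_set (fst ` D))))"

definition mcount :: "letter list \<Rightarrow> nat \<Rightarrow> nat \<Rightarrow> nat" where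
  "mcount w i j =
     (let n = length w in
      if j \<le> n then count_list (drop (n - j) w) (i, False)
      else count_list w (i, False) + count_list (take (j - n) w) (i, True))"

definition k_amenable :: "nat \<Rightarrow> letter list \<Rightarrow> bool" where
  "k_amenable k w \<longleftrightarrow>
     (let n = length w in
      (\<forall>j. j < n \<longrightarrow> mcount w k j = mcount w (k - 1) j \<longrightarrow>
            w ! (n - j - 1) \<notin> {(k, False), (k, True)}) \<and>
      (\<forall>j. n \<le> j \<and> j < 2 * n \<longrightarrow> mcount w k j = mcount w (k - 1) j \<longrightarrow>
            w ! (j - n) \<notin> {(k - 1, False), (k, True)}) \<and>
      (case filter (\<lambda>a. a \<in> {(k, True), (k, False)}) w of
         [] \<Rightarrow> True | a # _ \<Rightarrow> a = (k, False)) \<and>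
      (case filter (\<lambda>a. a \<in> {(k - 1, True), (k - 1, False)}) w of
         [] \<Rightarrow> True | a # _ \<Rightarrow> a = (k - 1, False)))"

definition amenable :: "(nat \<times> nat) set \<Rightarrow> ((nat \<times> nat) \<Rightarrow> letter) \<Rightarrow> bool" where
  "amenable D T \<longleftrightarrow> (\<forall>k>1. k_amenable k (reading_word D T))"

text \<open>Tableaux are functions on D; outside D they are fixed to a dummy value so that
  distinct tableaux correspond to distinct functions.\<close>

definition fcoef :: "nat list \<Rightarrow> nat list \<Rightarrow> nat list \<Rightarrow> nat" where
  "fcoef lam mu nu =
     card {T. tableau (skew_diagram lam mu) T \<and> amenable (skew_diagram lam mu) T \<and>
              content (skew_diagram lam mu) T = nu \<and>
              (\<forall>c. c \<notin> skew_diagram lam mu \<longrightarrow> T c = (0, False))}"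

definition Pset :: "(nat \<times> nat) set \<Rightarrow> (nat \<times> nat) set" where
  "Pset U = {(x, y) \<in> U. (x - 1, y - 1) \<notin> U}"

text \<open>Ufam D k is U_{k+1}.\<close>
fun Ufam :: "(nat \<times> nat) set \<Rightarrow> nat \<Rightarrow> (nat \<times> nat) set" where
  "Ufam D 0 = D"
| "Ufam D (Suc k) = Ufam D k - Pset (Ufam D k)"

text \<open>Pk D k is P_k (for k >= 1).\<close>
definition Pk :: "(nat \<times> nat) set \<Rightarrow> nat \<Rightarrow> (nat \<times> nat) set" where
  "Pk D k = Pset (Ufam D (k - 1))"

definition Ttab :: "(nat \<times> nat) set \<Rightarrow> (nat \<times> nat) \<Rightarrow> letter" where
  "Ttab D c =
     (if c \<in> D then
        (let k = (LEAST k. k \<ge> 1 \<and> c \<in> Pk D k) in (k, (fst c + 1, snd c) \<in> Pk D k))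
      else (0, False))"

definition adjacent :: "(nat \<times> nat) \<Rightarrow> (nat \<times> nat) \<Rightarrow> bool" where
  "adjacent a b \<longleftrightarrow>
     (fst a = fst b \<and> (snd b = snd a + 1 \<or> snd a = snd b + 1)) \<or>
     (snd a = snd b \<and> (fst b = fst a + 1 \<or> fst a = fst b + 1))"

definition comp :: "(nat \<times> nat) set \<Rightarrow> nat" where
  "comp D = card (D // ({(a, b). a \<in> D \<and> b \<in> D \<and> adjacent a b}\<^sup>*))"

end

theory Submission
  imports Defs
begin


definition cntp :: "nat \<Rightarrow> nat list \<Rightarrow> nat" where
  "cntp d lam = length (filter (\<lambda>x. d < x) lam)"

lemma cntp_key:
  assumes "sorted_wrt (>) lam" "i < length lam"
  shows "d < lam ! i \<longleftrightarrow> i < cntp d lam"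
  using assms
proof (induction lam arbitrary: i)
  case Nil then show ?case by simp
next
  case (Cons h t)
  have ht: "\<forall>x\<in>set t. x < h" using Cons.prems(1) by simp
  have st: "sorted_wrt (>) t" using Cons.prems(1) by simp
  show ?case
  proof (cases "d < h")
    case True
    then have c: "cntp d (h#t) = Suc (cntp d t)" by (simp add: cntp_def)
    show ?thesis
    proof (cases i)
      case 0 then show ?thesis using True c by simp
    next
      case (Suc i') then show ?thesis using Cons.IH[OF st, of i'] Cons.prems(2) c by simp
    qed
  next
    case False
    then have "filter (\<lambda>x. d < x) t = []" using ht by (auto simp: filter_empty_conv)
    then have c: "cntp d (h#t) = 0" using False by (simp add: cntp_def)
    have "\<not> d < (h#t) ! i"
    proof (cases i)
      case 0 then show ?thesis using False by simp
    next
      case (Suc i') then show ?thesis using ht Cons.prems(2) False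
        by (simp) (meson leI less_trans nth_mem)
    qed
    then show ?thesis using c by simp
  qed
qed

lemma cntp_le_length: "cntp d lam \<le> length lam"
  by (simp add: cntp_def)

lemma shifted_char:
  assumes "DP lam"
  shows "shifted_diagram lam = {(x,y). 1 \<le> x \<and> x \<le> y \<and> x \<le> cntp (y-x) lam}"
proof -
  have s: "sorted_wrt (>) lam" using assms by (simp add: DP_def)
  have "(i,j) \<in> shifted_diagram lam \<longleftrightarrow> 1 \<le> i \<and> i \<le> j \<and> i \<le> cntp (j-i) lam" for i j
  proof (cases "1 \<le> i \<and> i \<le> j \<and> i \<le> length lam")
    case True
    have "j + 1 \<le> i + lam ! (i-1) \<longleftrightarrow> j - i < lam ! (i-1)" using True by auto
    also have "\<dots> \<longleftrightarrow> i - 1 < cntp (j-i) lam" using cntp_key[OF s, of "i-1"] True by auto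
    finally show ?thesis using True unfolding shifted_diagram_def by auto
  next
    case False
    then show ?thesis unfolding shifted_diagram_def using cntp_le_length[of "j-i" lam]
      by auto
  qed
  then show ?thesis by auto
qed

lemma cntp_mono: "cntp (Suc d) lam \<le> cntp d lam"
  unfolding cntp_def by (induction lam) auto

lemma cntp_step:
  assumes "sorted_wrt (>) lam"
  shows "cntp d lam \<le> Suc (cntp (Suc d) lam)"
  using assms
proof (induction lam)
  case Nil then show ?case by (simp add: cntp_def)
next
  case (Cons h t)
  have ht: "\<forall>x\<in>set t. x < h" using Cons.prems(1) by simp
  show ?case
  proof (cases "Suc d < h")
    case True then show ?thesis using Cons by (simp add: cntp_def)
  next
    case False
    then have "filter (\<lambda>x. d < x) t = []" using ht by (auto simp: filter_empty_conv)
    then show ?thesis using False by (simp add: cntp_def)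
  qed
qed

lemma cntp_zero: "sum_list lam \<le> d \<Longrightarrow> cntp d lam = 0"
  unfolding cntp_def by (induction lam) auto




locale sk =
  fixes a b :: "nat \<Rightarrow> nat" and W :: nat
  assumes a_mono: "\<And>d. a (Suc d) \<le> a d"
  and a_step: "\<And>d. a d \<le> Suc (a (Suc d))"
  and b_mono: "\<And>d. b (Suc d) \<le> b d"
  and b_step: "\<And>d. b d \<le> Suc (b (Suc d))"
  and ba: "\<And>d. b d \<le> a d"
  and aW: "\<And>d. W \<le> d \<Longrightarrow> a d = 0"
begin

definition DD :: "(nat \<times> nat) set" where
  "DD = {(x,y). x \<le> y \<and> b (y-x) < x \<and> x \<le> a (y-x)}"
definition len :: "nat \<Rightarrow> nat" where "len d = a d - b d"
definition cell :: "nat \<Rightarrow> nat \<Rightarrow> nat \<times> nat" where "cell d k = (b d + k, b d + k + d)"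
definition S :: "nat \<Rightarrow> nat set" where "S k = {d. 0 < k \<and> k \<le> len d}"
definition dg :: "nat \<times> nat \<Rightarrow> nat" where "dg c = snd c - fst c"
definition val :: "nat \<times> nat \<Rightarrow> nat" where "val c = fst c - b (dg c)"
definition nonstart :: "nat \<Rightarrow> nat \<Rightarrow> bool" where "nonstart d k \<longleftrightarrow> 0 < d \<and> k \<le> len (d-1)"
definition forced :: "nat \<Rightarrow> nat \<Rightarrow> bool" where
  "forced d k \<longleftrightarrow> nonstart d k \<and> b d \<noteq> b (d-1)"

lemma a_anti: "d \<le> d' \<Longrightarrow> a d' \<le> a d"
  by (rule lift_Suc_antimono_le[of a]) (use a_mono in auto)
lemma b_anti: "d \<le> d' \<Longrightarrow> b d' \<le> b d"
  by (rule lift_Suc_antimono_le[of b]) (use b_mono in auto)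
lemma b_lip: "d \<le> d' \<Longrightarrow> b d \<le> b d' + (d' - d)"
proof (induction d' rule: dec_induct)
  case base then show ?case by simp
next
  case (step n) then show ?case using b_step[of n] by simp
qed
lemma a_lip: "d \<le> d' \<Longrightarrow> a d \<le> a d' + (d' - d)"
proof (induction d' rule: dec_induct)
  case base then show ?case by simp
next
  case (step n) then show ?case using a_step[of n] by simp
qed

lemma S_sub: "S k \<subseteq> {..<W}"
proof
  fix d assume "d \<in> S k"
  then have "0 < a d" using ba[of d] by (auto simp: S_def len_def)
  then show "d \<in> {..<W}" using aW[of d] by (cases "W \<le> d") auto
qed
lemma S_fin[simp]: "finite (S k)" using S_sub finite_subset by blast

lemma cell_inj: "cell d k = cell d' k' \<Longrightarrow> d = d' \<and> k = k'"
proof -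
  assume h: "cell d k = cell d' k'"
  then have "d = d'" by (simp add: cell_def)
  then show ?thesis using h by (simp add: cell_def)
qed

lemma dg_cell[simp]: "dg (cell d k) = d" by (simp add: dg_def cell_def)
lemma val_cell[simp]: "val (cell d k) = k" by (simp add: val_def) (simp add: cell_def)

lemma cell_DD: "d \<in> S k \<Longrightarrow> cell d k \<in> DD"
  by (auto simp: S_def cell_def DD_def len_def)

lemma DD_cell: "c \<in> DD \<Longrightarrow> c = cell (dg c) (val c) \<and> dg c \<in> S (val c)"
  by (cases c) (auto simp: S_def cell_def DD_def len_def dg_def val_def)

lemma DD_eq: "DD = {cell d k | d k. d \<in> S k}"
  using DD_cell cell_DD by blast

lemma Ufam_char: "Ufam DD k = {(x,y). x \<le> y \<and> b (y-x) + k < x \<and> x \<le> a (y-x)}"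
proof (induction k)
  case 0 then show ?case by (simp add: DD_def)
next
  case (Suc k)
  have "(x,y) \<in> Ufam DD (Suc k) \<longleftrightarrow> x \<le> y \<and> b (y-x) + Suc k < x \<and> x \<le> a (y-x)" for x y
  proof -
    have "(x,y) \<in> Ufam DD (Suc k) \<longleftrightarrow> (x,y) \<in> Ufam DD k \<and> (x-1,y-1) \<in> Ufam DD k"
      by (auto simp: Pset_def)
    also have "\<dots> \<longleftrightarrow> x \<le> y \<and> b (y-x) + Suc k < x \<and> x \<le> a (y-x)"
    proof -
      have "x \<le> y \<and> b (y-x) + k < x \<Longrightarrow> y - 1 - (x - 1) = y - x" by auto
      then show ?thesis unfolding Suc by auto
    qed
    finally show ?thesis .
  qed
  then show ?case by auto
qed

lemma Pk_char: "0 < k \<Longrightarrow> Pk DD k = {(x,y). x \<le> y \<and> x = b (y-x) + k \<and> x \<le> a (y-x)}"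
proof -
  assume k: "0 < k"
  have "(x,y) \<in> Pk DD k \<longleftrightarrow> x \<le> y \<and> x = b (y-x) + k \<and> x \<le> a (y-x)" for x y
  proof -
    have "(x,y) \<in> Pk DD k \<longleftrightarrow> (x,y) \<in> Ufam DD (k-1) \<and> (x-1,y-1) \<notin> Ufam DD (k-1)"
      by (simp add: Pk_def Pset_def)
    also have "\<dots> \<longleftrightarrow> x \<le> y \<and> x = b (y-x) + k \<and> x \<le> a (y-x)"
    proof -
      have "x \<le> y \<and> b (y-x) + (k-1) < x \<Longrightarrow> y - 1 - (x - 1) = y - x" by auto
      then show ?thesis unfolding Ufam_char using k by auto
    qed
    finally show ?thesis .
  qed
  then show ?thesis by auto
qed

lemma Pk_cell: "0 < k \<Longrightarrow> Pk DD k = (\<lambda>d. cell d k) ` S k"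
proof -
  assume k: "0 < k"
  show ?thesis
  proof (rule set_eqI)
    fix c
    show "c \<in> Pk DD k \<longleftrightarrow> c \<in> (\<lambda>d. cell d k) ` S k"
    proof
      assume "c \<in> Pk DD k"
      then obtain x y where c: "c = (x,y)" "x \<le> y" "x = b (y-x) + k" "x \<le> a (y-x)"
        using Pk_char[OF k] by auto
      then have "c = cell (y-x) k" "y - x \<in> S k" using k by (auto simp: cell_def S_def len_def)
      then show "c \<in> (\<lambda>d. cell d k) ` S k" by auto
    next
      assume "c \<in> (\<lambda>d. cell d k) ` S k"
      then show "c \<in> Pk DD k" using Pk_char[OF k] by (auto simp: cell_def S_def len_def)
    qed
  qed
qed

lemma cell_in_Pk: "d \<in> S k \<Longrightarrow> cell d k \<in> Pk DD k"
  using Pk_cell[of k] by (auto simp: S_def)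

lemma cell_in_Pk_iff: "0 < k \<Longrightarrow> cell d k' \<in> Pk DD k \<longleftrightarrow> k' = k \<and> d \<in> S k"
  using Pk_cell[of k] cell_inj by (auto, metis cell_inj)

lemma Ttab_cell:
  assumes "d \<in> S k"
  shows "Ttab DD (cell d k) = (k, forced d k)"
proof -
  have k: "0 < k" using assms by (simp add: S_def)
  have c: "cell d k \<in> DD" using cell_DD[OF assms] .
  have L: "(LEAST k'. k' \<ge> 1 \<and> cell d k \<in> Pk DD k') = k"
  proof (rule Least_equality)
    show "k \<ge> 1 \<and> cell d k \<in> Pk DD k" using k cell_in_Pk[OF assms] by simp
  next
    fix y assume "y \<ge> 1 \<and> cell d k \<in> Pk DD y"
    then show "k \<le> y" using cell_in_Pk_iff[of y d k] by auto
  qed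
  have m: "(fst (cell d k) + 1, snd (cell d k)) \<in> Pk DD k \<longleftrightarrow> forced d k"
  proof -
    have "(fst (cell d k) + 1, snd (cell d k)) \<in> Pk DD k \<longleftrightarrow>
       (b d + k + 1 \<le> b d + k + d \<and> b d + k + 1 = b (d-1) + k \<and> b d + k + 1 \<le> a (d-1))"
      using Pk_char[OF k] by (simp add: cell_def)
    also have "\<dots> \<longleftrightarrow> forced d k"
      using b_step[of "d-1"] b_mono[of "d-1"] ba[of "d-1"]
      by (cases d) (auto simp: forced_def nonstart_def len_def)
    finally show ?thesis .
  qed
  show ?thesis using c L m by (simp add: Ttab_def Let_def)
qed

end



lemma rank_mono_fst: "rank u \<le> rank v \<Longrightarrow> 1 \<le> fst u \<Longrightarrow> fst u \<le> fst v"
  by (cases u; cases v) (auto simp: rank_def split: if_splits)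
lemma rank_mark: "rank u \<le> rank v \<Longrightarrow> fst u = fst v \<Longrightarrow> 1 \<le> fst u \<Longrightarrow> snd v \<Longrightarrow> snd u"
  by (cases u; cases v) (auto simp: rank_def split: if_splits)
lemma rank_lt: "fst u < fst v \<Longrightarrow> rank u < rank v"
  by (cases u; cases v) (auto simp: rank_def split: if_splits)

context sk begin

lemma tab_fst: "tableau DD T \<Longrightarrow> c \<in> DD \<Longrightarrow> 1 \<le> fst (T c)"
  by (simp add: tableau_def)

lemma diag_strict:
  assumes T: "tableau DD T" and c1: "(x,y) \<in> DD" and c2: "(x+1,y+1) \<in> DD"
  shows "fst (T (x,y)) < fst (T (x+1,y+1))"
proof (rule ccontr)
  assume nl: "\<not> ?thesis"
  have c3: "(x,y+1) \<in> DD"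
  proof -
    have "b (y+1-x) \<le> b (y-x)" using b_anti[of "y-x" "y+1-x"] by simp
    moreover have "a (y-x) \<le> Suc (a (y+1-x))" using a_step[of "y-x"] c1 by (auto simp: DD_def Suc_diff_le)
    ultimately show ?thesis using c1 c2 by (auto simp: DD_def)
  qed
  have r1: "rank (T (x,y)) \<le> rank (T (x,y+1))" using T c1 c3 unfolding tableau_def by auto
  have r2: "rank (T (x,y+1)) \<le> rank (T (x+1,y+1))" using T c2 c3 unfolding tableau_def by auto
  have f1: "1 \<le> fst (T (x,y))" "1 \<le> fst (T (x,y+1))" "1 \<le> fst (T (x+1,y+1))"
    using tab_fst[OF T] c1 c2 c3 by auto
  have e1: "fst (T (x,y)) = fst (T (x,y+1))" and e2: "fst (T (x,y+1)) = fst (T (x+1,y+1))"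
    using rank_mono_fst[OF r1 f1(1)] rank_mono_fst[OF r2 f1(2)] nl by auto
  have u: "\<not> snd (T (x,y+1))"
  proof
    assume m: "snd (T (x,y+1))"
    then have "snd (T (x,y))" using rank_mark[OF r1 e1 f1(1)] by simp
    then have "T (x,y) = T (x,y+1)" using m e1 by (cases "T (x,y)"; cases "T (x,y+1)") auto
    then show False using T c1 c3 m unfolding tableau_def by (metis n_not_Suc_n Suc_eq_plus1)
  qed
  then have "\<not> snd (T (x+1,y+1))" using rank_mark[OF r2 e2] f1 e1 by auto
  then have "T (x,y+1) = T (x+1,y+1)" using u e2 by (cases "T (x+1,y+1)"; cases "T (x,y+1)") auto
  then show False using T c2 c3 u unfolding tableau_def by (metis n_not_Suc_n Suc_eq_plus1)
qed

lemma val_le_fst: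
  assumes T: "tableau DD T"
  shows "d \<in> S k \<Longrightarrow> k \<le> fst (T (cell d k))"
proof (induction k)
  case 0 then show ?case by simp
next
  case (Suc k)
  show ?case
  proof (cases k)
    case 0 then show ?thesis using tab_fst[OF T cell_DD[OF Suc.prems]] by simp
  next
    case (Suc k')
    have dk: "d \<in> S k" using Suc.prems \<open>k = Suc k'\<close> by (simp add: S_def)
    have "k \<le> fst (T (cell d k))" using Suc.IH[OF dk] .
    also have "\<dots> < fst (T (cell d (Suc k)))"
      using diag_strict[OF T, of "b d + k" "b d + k + d"] cell_DD[OF dk] cell_DD[OF Suc.prems]
      by (simp add: cell_def)
    finally show ?thesis by simp
  qed
qed

lemma val_le_fst': "tableau DD T \<Longrightarrow> c \<in> DD \<Longrightarrow> val c \<le> fst (T c)"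
  using val_le_fst DD_cell by metis

lemma DD_fin[simp]: "finite DD"
proof -
  have "DD \<subseteq> {..a 0} \<times> {..a 0 + W}"
  proof
    fix c assume c: "c \<in> DD"
    then obtain x y where xy: "c = (x,y)" "x \<le> y" "x \<le> a (y-x)" "b (y-x) < x" by (auto simp: DD_def)
    then have "y - x < W" using aW[of "y-x"] by (cases "W \<le> y - x") auto
    moreover have "x \<le> a 0" using xy a_anti[of 0 "y-x"] by auto
    ultimately show "c \<in> {..a 0} \<times> {..a 0 + W}" using xy by auto
  qed
  then show ?thesis using finite_subset by blast
qed

lemma Ttab_DD: "c \<in> DD \<Longrightarrow> Ttab DD c = (val c, forced (dg c) (val c))"
  using Ttab_cell DD_cell by metis

end




lemma content_sum:
  assumes fin: "finite D" and pos: "\<forall>c\<in>D. 1 \<le> fst (f c)"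
  shows "(\<Sum>c\<in>D. fst (f c)) = (\<Sum>i<length (content D f). (i+1) * content D f ! i)"
proof (cases "D = {}")
  case True then show ?thesis by (simp add: content_def)
next
  case False
  define g where "g = (\<lambda>c. fst (f c))"
  define m where "m = Max (g ` D)"
  have cm: "content D f = map (\<lambda>i. card {c\<in>D. g c = i}) [1..<m+1]"
    unfolding content_def Let_def m_def g_def using False by simp
  have rng: "g ` D \<subseteq> {1..m}" using pos fin unfolding m_def g_def by auto
  have "(\<Sum>c\<in>D. g c) = (\<Sum>i\<in>g ` D. \<Sum>c\<in>{c\<in>D. g c = i}. g c)"
    by (rule sum.image_gen[OF fin])
  also have "\<dots> = (\<Sum>i\<in>g ` D. i * card {c\<in>D. g c = i})"
    by (rule sum.cong) simp_all
  also have "\<dots> = (\<Sum>i\<in>{1..m}. i * card {c\<in>D. g c = i})"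
  proof (rule sum.mono_neutral_left)
    show "finite {1..m}" by simp
    show "g ` D \<subseteq> {1..m}" by (rule rng)
    show "\<forall>i\<in>{1..m} - g ` D. i * card {c \<in> D. g c = i} = 0"
    proof
      fix i assume "i \<in> {1..m} - g ` D"
      then have "{c \<in> D. g c = i} = {}" by auto
      then show "i * card {c \<in> D. g c = i} = 0" by (metis card.empty mult_0_right)
    qed
  qed
  also have "\<dots> = (\<Sum>i<m. (i+1) * card {c\<in>D. g c = i+1})"
  proof -
      show ?thesis by (simp add: sum.atLeast1_atMost_eq)
  qed
  also have "\<dots> = (\<Sum>i<length (content D f). (i+1) * content D f ! i)"
    unfolding cm by (simp add: atLeastLessThan_upt[symmetric] del: upt_Suc)
  finally show ?thesis unfolding g_def .
qed




lemma rank_unmark: "rank u \<le> rank v \<Longrightarrow> fst u = fst v \<Longrightarrow> 1 \<le> fst u \<Longrightarrow> \<not> snd u \<Longrightarrow> \<not> snd v"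
  by (cases u; cases v) (auto simp: rank_def split: if_splits)
lemma rank_eqv: "fst u = fst v \<Longrightarrow> 1 \<le> fst u \<Longrightarrow> (\<not> snd u \<or> snd v) \<Longrightarrow> rank v \<le> rank u"
  by (cases u; cases v) (auto simp: rank_def split: if_splits)

context sk begin

definition goodv :: "((nat \<times> nat) \<Rightarrow> letter) \<Rightarrow> bool" where
  "goodv T \<longleftrightarrow> (\<forall>c\<in>DD. fst (T c) = val c)"

lemma val_pos: "c \<in> DD \<Longrightarrow> 1 \<le> val c"
  using DD_cell[of c] by (auto simp: S_def)

lemma vals_eq:
  assumes T: "tableau DD T" and ct: "content DD T = content DD (Ttab DD)"
  shows "goodv T"
proof (rule ccontr)
  assume "\<not> goodv T"
  then obtain c where c: "c \<in> DD" "fst (T c) \<noteq> val c" by (auto simp: goodv_def)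
  have le: "\<forall>c\<in>DD. fst (Ttab DD c) \<le> fst (T c)" using val_le_fst'[OF T] Ttab_DD by simp
  have lt: "fst (Ttab DD c) < fst (T c)" using c val_le_fst'[OF T c(1)] Ttab_DD by simp
  have "(\<Sum>c\<in>DD. fst (Ttab DD c)) < (\<Sum>c\<in>DD. fst (T c))"
    by (rule sum_strict_mono_ex1) (use le lt c in auto)
  moreover have "(\<Sum>c\<in>DD. fst (Ttab DD c)) = (\<Sum>c\<in>DD. fst (T c))"
  proof -
    have p1: "\<forall>c\<in>DD. 1 \<le> fst (Ttab DD c)" using Ttab_DD val_pos by simp
    have p2: "\<forall>c\<in>DD. 1 \<le> fst (T c)" using tab_fst[OF T] by simp
    show ?thesis using content_sum[OF DD_fin p1] content_sum[OF DD_fin p2] ct by simp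
  qed
  ultimately show False by simp
qed

lemma pt_cell: "(i,j) \<in> DD \<Longrightarrow> (i,j) = cell (j-i) (val (i,j)) \<and> (j-i) \<in> S (val (i,j))"
  using DD_cell[of "(i,j)"] by (simp add: dg_def)

lemma row_same:
  assumes c1: "(i,j) \<in> DD" and c2: "(i,j') \<in> DD" and jj: "j < j'" and bb: "b (j'-i) = b (j-i)"
  shows "nonstart (j'-i) (val (i,j')) \<and> \<not> forced (j'-i) (val (i,j'))"
proof -
  have ij: "i \<le> j" "i \<le> j'" using c1 c2 by (auto simp: DD_def)
  have q: "j-i \<le> j'-i-1" "j'-i-1 \<le> j'-i" using jj ij by auto
  have b1: "b (j'-i-1) = b (j'-i)"
    using b_anti[OF q(1)] b_anti[OF q(2)] bb by linarith
  have a1: "a (j'-i) \<le> a (j'-i-1)" using a_anti[of "j'-i-1" "j'-i"] by auto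
  have i2: "i \<le> a (j'-i-1)" "b (j'-i) < i" using c2 a1 by (auto simp: DD_def)
  show ?thesis using b1 i2 jj ij
    by (auto simp: nonstart_def forced_def len_def val_def dg_def)
qed

lemma col_same:
  assumes c1: "(i,j) \<in> DD" and c2: "(i',j) \<in> DD" and ii: "i < i'" and vv: "val (i,j) = val (i',j)"
  shows "nonstart (j-i) (val (i,j)) \<and> forced (j-i) (val (i,j))"
proof -
  have ij: "i' \<le> j" "i \<le> j" "b (j-i) < i" "b (j-i') < i'" "i' \<le> a (j-i')"
    using c1 c2 by (auto simp: DD_def)
  obtain p where p: "i' = i + Suc p" using less_imp_Suc_add[OF ii] by auto
  define e' where "e' = j - i'"
  have ee: "j - i = e' + Suc p" using p ij unfolding e'_def by simp
  have em: "j - i - 1 = e' + p" using ee by simp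
  have h: "i - b (e' + Suc p) = i' - b e'" using vv ee by (simp add: val_def dg_def e'_def)
  have bi: "b (e' + Suc p) < i" using ij(3) ee by simp
  have bi': "b e' < i'" using ij(4) unfolding e'_def by simp
  have bv: "b e' = b (e' + Suc p) + Suc p" using h bi bi' p by arith
  have l1: "b e' \<le> b (e'+p) + p" using b_lip[of e' "e'+p"] by simp
  have l2: "b (e'+p) \<le> Suc (b (e' + Suc p))" using b_step[of "e'+p"] by simp
  have b1: "b (e'+p) = Suc (b (e' + Suc p))" using l1 l2 bv by linarith
  have l3: "a e' \<le> a (e'+p) + p" using a_lip[of e' "e'+p"] by simp
  have a5: "i' \<le> a e'" using ij(5) unfolding e'_def by simp
  have a1: "i + 1 \<le> a (e'+p)" using l3 a5 p by linarith
  show ?thesis unfolding nonstart_def forced_def len_def val_def dg_def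
    using b1 a1 bi by (simp add: ee em)
qed

lemma tab_forced:
  assumes g: "goodv T" and T: "tableau DD T" and dS: "d \<in> S k" and ns: "nonstart d k"
  shows "snd (T (cell d k)) = forced d k"
proof -
  have k: "1 \<le> k" using dS by (simp add: S_def)
  have d0: "0 < d" and dS': "d - 1 \<in> S k" using ns k by (auto simp: nonstart_def S_def)
  have c: "cell d k \<in> DD" "cell (d-1) k \<in> DD" using cell_DD dS dS' by auto
  have f: "fst (T (cell d k)) = k" "fst (T (cell (d-1) k)) = k"
    using g c by (auto simp: goodv_def)
  show ?thesis
  proof (cases "b d = b (d-1)")
    case True
    have e1: "cell (d-1) k = (b d + k, b d + k + (d-1))" using True by (simp add: cell_def)
    have e2: "cell d k = (b d + k, b d + k + d)" by (simp add: cell_def)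
    have r: "rank (T (cell (d-1) k)) \<le> rank (T (cell d k))"
      using T c unfolding tableau_def e1 e2 by auto
    have "\<not> snd (T (cell d k))"
    proof
      assume m: "snd (T (cell d k))"
      then have m2: "snd (T (cell (d-1) k))" using rank_mark[OF r] f k by simp
      then have "T (cell (d-1) k) = T (cell d k)" using m f by (simp add: prod_eq_iff)
      moreover have "b d + k + (d-1) \<noteq> b d + k + d" using d0 by simp
      ultimately show False using T c m2 unfolding tableau_def e1 e2 by blast
    qed
    then show ?thesis using True by (simp add: forced_def)
  next
    case False
    then have bb: "b (d-1) = Suc (b d)" using b_step[of "d-1"] b_mono[of "d-1"] d0 by simp
    have e1: "cell (d-1) k = (b d + k + 1, b d + k + d)" using bb d0 by (simp add: cell_def)
    have e2: "cell d k = (b d + k, b d + k + d)" by (simp add: cell_def)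
    have r: "rank (T (cell d k)) \<le> rank (T (cell (d-1) k))"
      using T c unfolding tableau_def e1 e2 by auto
    have "snd (T (cell d k))"
    proof (rule ccontr)
      assume m: "\<not> snd (T (cell d k))"
      then have m2: "\<not> snd (T (cell (d-1) k))" using rank_unmark[OF r] f k by simp
      then have "T (cell (d-1) k) = T (cell d k)" using m f by (simp add: prod_eq_iff)
      moreover have "b d + k + 1 \<noteq> b d + k" by simp
      ultimately show False using T c m2 unfolding tableau_def e1 e2 by blast
    qed
    then show ?thesis using False ns by (simp add: forced_def)
  qed
qed

definition fmark :: "((nat \<times> nat) \<Rightarrow> letter) \<Rightarrow> bool" where
  "fmark T \<longleftrightarrow> (\<forall>d k. d \<in> S k \<longrightarrow> nonstart d k \<longrightarrow> snd (T (cell d k)) = forced d k)"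

lemma fmark_pt: "fmark T \<Longrightarrow> (i,j) \<in> DD \<Longrightarrow> nonstart (j-i) (val (i,j)) \<Longrightarrow>
   snd (T (i,j)) = forced (j-i) (val (i,j))"
  using pt_cell[of i j] unfolding fmark_def by metis

lemma forced_tab:
  assumes g: "goodv T" and fm: "fmark T"
  shows "tableau DD T"
proof -
  have fv: "\<And>c. c \<in> DD \<Longrightarrow> fst (T c) = val c" using g by (simp add: goodv_def)
  have vp: "\<And>c. c \<in> DD \<Longrightarrow> 1 \<le> val c" by (rule val_pos)
  have rowR: "\<not> snd (T (i,j'))" if c1: "(i,j) \<in> DD" and c2: "(i,j') \<in> DD" and jj: "j < j'"
    and vv: "val (i,j) = val (i,j')" for i j j'
  proof -
    have h: "i - b (j-i) = i - b (j'-i)" "b (j-i) < i" "b (j'-i) < i"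
      using vv c1 c2 by (auto simp: val_def dg_def DD_def)
    then have "b (j'-i) = b (j-i)" by arith
    then show ?thesis using row_same[OF c1 c2 jj] fmark_pt[OF fm c2] by auto
  qed
  have colU: "snd (T (i,j))" if c1: "(i,j) \<in> DD" and c2: "(i',j) \<in> DD" and ii: "i < i'"
    and vv: "val (i,j) = val (i',j)" for i i' j
    using col_same[OF c1 c2 ii vv] fmark_pt[OF fm c1] by auto
  have rowval: "val (i,j) \<le> val (i,j')" if c1: "(i,j) \<in> DD" and c2: "(i,j') \<in> DD" and jj: "j \<le> j'" for i j j'
  proof -
    have "b (j'-i) \<le> b (j-i)" using b_anti[of "j-i" "j'-i"] jj by simp
    then show ?thesis by (simp add: val_def dg_def diff_le_mono2)
  qed
  have colval: "val (i,j) \<le> val (i',j)" if c1: "(i,j) \<in> DD" and c2: "(i',j) \<in> DD" and ii: "i \<le> i'" for i i' j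
  proof -
    have "b (j-i') \<le> b (j-i) + ((j-i) - (j-i'))" using b_lip[of "j-i'" "j-i"] ii by auto
    then show ?thesis using c1 c2 ii by (auto simp: val_def dg_def DD_def)
  qed
  show ?thesis unfolding tableau_def
  proof (intro conjI allI impI ballI)
    fix c assume "c \<in> DD" then show "1 \<le> fst (T c)" using fv vp by simp
  next
    fix i j j' assume c1: "(i,j) \<in> DD" and c2: "(i,j') \<in> DD" and jj: "j \<le> j'"
    show "rank (T (i,j)) \<le> rank (T (i,j'))"
    proof (cases "val (i,j) = val (i,j')")
      case True
      show ?thesis
      proof (cases "j = j'")
        case True then show ?thesis by simp
      next
        case False
        then have "\<not> snd (T (i,j'))" using rowR[OF c1 c2 _ True] jj by simp
        then show ?thesis using rank_eqv[of "T (i,j')" "T (i,j)"] fv[OF c1] fv[OF c2] vp[OF c1] True by auto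
      qed
    next
      case False
      then have "fst (T (i,j)) < fst (T (i,j'))" using rowval[OF c1 c2 jj] fv c1 c2 by simp
      then show ?thesis using rank_lt by (simp add: less_imp_le)
    qed
  next
    fix i i' j assume c1: "(i,j) \<in> DD" and c2: "(i',j) \<in> DD" and ii: "i \<le> i'"
    show "rank (T (i,j)) \<le> rank (T (i',j))"
    proof (cases "val (i,j) = val (i',j)")
      case True
      show ?thesis
      proof (cases "i = i'")
        case True then show ?thesis by simp
      next
        case False
        then have "snd (T (i,j))" using colU[OF c1 c2 _ True] ii by simp
        then show ?thesis using rank_eqv[of "T (i',j)" "T (i,j)"] fv[OF c1] fv[OF c2] vp[OF c1] True by auto
      qed
    next
      case False
      then have "fst (T (i,j)) < fst (T (i',j))" using colval[OF c1 c2 ii] fv c1 c2 by simp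
      then show ?thesis using rank_lt by (simp add: less_imp_le)
    qed
  next
    fix i i' j assume c1: "(i,j) \<in> DD" and c2: "(i',j) \<in> DD" and ii: "i \<noteq> i'" and eq: "T (i,j) = T (i',j)"
    have vv: "val (i,j) = val (i',j)" using eq fv[OF c1] fv[OF c2] by simp
    show "snd (T (i,j))"
    proof (cases "i < i'")
      case True then show ?thesis using colU[OF c1 c2 True vv] by simp
    next
      case False then have "i' < i" using ii by simp
      then show ?thesis using colU[OF c2 c1 _ vv[symmetric]] eq by simp
    qed
  next
    fix i j j' assume c1: "(i,j) \<in> DD" and c2: "(i,j') \<in> DD" and jj: "j \<noteq> j'" and eq: "T (i,j) = T (i,j')"
    have vv: "val (i,j) = val (i,j')" using eq fv[OF c1] fv[OF c2] by simp
    show "\<not> snd (T (i,j))"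
    proof (cases "j < j'")
      case True then show ?thesis using rowR[OF c1 c2 True vv] eq by simp
    next
      case False then have "j' < j" using jj by simp
      then show ?thesis using rowR[OF c2 c1 _ vv[symmetric]] by simp
    qed
  qed
qed

lemma tab_iff: "goodv T \<Longrightarrow> tableau DD T \<longleftrightarrow> fmark T"
  using forced_tab tab_forced unfolding fmark_def by blast

end



definition rd :: "(nat \<times> nat) \<Rightarrow> (nat \<times> nat) \<Rightarrow> bool" where
  "rd c c' \<longleftrightarrow> fst c > fst c' \<or> (fst c = fst c' \<and> snd c < snd c')"

lemma rd_irrefl: "\<not> rd c c" by (simp add: rd_def)
lemma rd_asym: "rd c c' \<Longrightarrow> \<not> rd c' c" by (auto simp: rd_def)
lemma rd_total: "c \<noteq> c' \<Longrightarrow> rd c c' \<or> rd c' c" by (cases c; cases c') (auto simp: rd_def)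
lemma rd_trans: "rd c c' \<Longrightarrow> rd c' c'' \<Longrightarrow> rd c c''" by (auto simp: rd_def)

lemma sorted_drop_set:
  assumes s: "sorted_wrt R xs" and irr: "\<And>x. \<not> R x x" and asy: "\<And>x y. R x y \<Longrightarrow> \<not> R y x"
    and p: "p < length xs"
  shows "set (drop (Suc p) xs) = {c \<in> set xs. R (xs!p) c}"
proof (rule set_eqI)
  fix c
  show "c \<in> set (drop (Suc p) xs) \<longleftrightarrow> c \<in> {c \<in> set xs. R (xs!p) c}"
  proof
    assume "c \<in> set (drop (Suc p) xs)"
    then obtain q where q: "q < length xs - Suc p" "c = drop (Suc p) xs ! q" by (auto simp: in_set_conv_nth)
    then have c: "c = xs ! (Suc p + q)" "Suc p + q < length xs" by auto
    then show "c \<in> {c \<in> set xs. R (xs!p) c}" using sorted_wrt_nth_less[OF s, of p "Suc p + q"] by auto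
  next
    assume "c \<in> {c \<in> set xs. R (xs!p) c}"
    then obtain q where q: "q < length xs" "c = xs ! q" "R (xs!p) (xs!q)" by (auto simp: in_set_conv_nth)
    have "p < q"
    proof (rule ccontr)
      assume "\<not> p < q"
      then have "q = p \<or> q < p" by auto
      then show False using q irr asy sorted_wrt_nth_less[OF s, of q p] p by auto
    qed
    then show "c \<in> set (drop (Suc p) xs)" using q by (auto simp: in_set_conv_nth intro!: exI[of _ "q - Suc p"])
  qed
qed

lemma sorted_take_set:
  assumes s: "sorted_wrt R xs" and irr: "\<And>x. \<not> R x x" and asy: "\<And>x y. R x y \<Longrightarrow> \<not> R y x"
    and p: "p < length xs"
  shows "set (take p xs) = {c \<in> set xs. R c (xs!p)}"
proof (rule set_eqI)
  fix c
  show "c \<in> set (take p xs) \<longleftrightarrow> c \<in> {c \<in> set xs. R c (xs!p)}"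
  proof
    assume "c \<in> set (take p xs)"
    then obtain q where q: "q < p" "c = xs ! q" using p by (auto simp: in_set_conv_nth)
    then show "c \<in> {c \<in> set xs. R c (xs!p)}" using sorted_wrt_nth_less[OF s, of q p] p by auto
  next
    assume "c \<in> {c \<in> set xs. R c (xs!p)}"
    then obtain q where q: "q < length xs" "c = xs ! q" "R (xs!q) (xs!p)" by (auto simp: in_set_conv_nth)
    have "q < p"
    proof (rule ccontr)
      assume "\<not> q < p"
      then have "q = p \<or> p < q" by auto
      then show False using q irr asy sorted_wrt_nth_less[OF s, of p q] p by auto
    qed
    then show "c \<in> set (take p xs)" using q p by (auto simp: in_set_conv_nth intro!: exI[of _ q])
  qed
qed

lemma count_map_card: "distinct ys \<Longrightarrow> count_list (map T ys) v = card {c \<in> set ys. T c = v}"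
proof -
  assume d: "distinct ys"
  have "count_list (map T ys) v = length (filter (\<lambda>c. T c = v) ys)"
  proof -
    have "((=) v \<circ> T) = (\<lambda>c. T c = v)" by (auto simp: fun_eq_iff)
    then show ?thesis by (simp add: count_list_eq_length_filter filter_map)
  qed
  also have "\<dots> = card (set (filter (\<lambda>c. T c = v) ys))" using d by (simp add: distinct_card del: set_filter)
  finally show ?thesis by simp
qed

definition rlist :: "(nat \<times> nat) set \<Rightarrow> (nat \<times> nat) list" where
  "rlist D = concat (map (\<lambda>i. map (\<lambda>j. (i, j)) (sorted_list_of_set {j. (i, j) \<in> D}))
                 (rev (sorted_list_of_set (fst ` D))))"

lemma rw_map: "reading_word D T = map T (rlist D)"
  by (simp add: reading_word_def rlist_def map_concat comp_def o_def)

lemma rows_fin: "finite D \<Longrightarrow> finite {j. (i, j) \<in> D}"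
proof -
  assume f: "finite D"
  have "{j. (i, j) \<in> D} \<subseteq> snd ` D" by force
  then show ?thesis using f finite_subset by blast
qed

lemma rlist_set: "finite D \<Longrightarrow> set (rlist D) = D"
  by (auto simp: rlist_def rows_fin image_iff)

lemma sorted_distinct_irr: "sorted_wrt R xs \<Longrightarrow> (\<And>x. \<not> R x x) \<Longrightarrow> distinct xs"
  by (induction xs) auto

lemma rows_sorted:
  "sorted_wrt (>) rs \<Longrightarrow> (\<And>i. finite (X i)) \<Longrightarrow>
   sorted_wrt rd (concat (map (\<lambda>i. map (Pair i) (sorted_list_of_set (X i))) rs))"
proof (induction rs)
  case Nil then show ?case by simp
next
  case (Cons r rs)
  have s1: "sorted_wrt rd (map (Pair r) (sorted_list_of_set (X r)))"
    unfolding sorted_wrt_map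
    by (rule sorted_wrt_mono_rel[OF _ strict_sorted_list_of_set[of "X r"]]) (simp add: rd_def)
  have s2: "sorted_wrt rd (concat (map (\<lambda>i. map (Pair i) (sorted_list_of_set (X i))) rs))"
    using Cons by simp
  have cr: "\<forall>x\<in>set (map (Pair r) (sorted_list_of_set (X r))).
      \<forall>y\<in>set (concat (map (\<lambda>i. map (Pair i) (sorted_list_of_set (X i))) rs)). rd x y"
    using Cons.prems(1) by (auto simp: rd_def)
  show ?case using s1 s2 cr by (simp add: sorted_wrt_append)
qed

lemma rlist_sorted: "finite D \<Longrightarrow> sorted_wrt rd (rlist D)"
  unfolding rlist_def
  by (rule rows_sorted) (auto simp: sorted_wrt_rev rows_fin intro: sorted_wrt_mono_rel[OF _ strict_sorted_list_of_set])

lemma rlist_distinct: "finite D \<Longrightarrow> distinct (rlist D)"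
  using rlist_sorted sorted_distinct_irr rd_irrefl by blast




lemma first_filter:
  assumes s: "sorted_wrt rd cl"
  shows "(case filter Q (map T cl) of [] \<Rightarrow> True | a # _ \<Rightarrow> a = v) \<longleftrightarrow>
         (\<forall>c0\<in>set cl. Q (T c0) \<and> (\<forall>c\<in>set cl. Q (T c) \<longrightarrow> \<not> rd c c0) \<longrightarrow> T c0 = v)"
proof -
  have fm: "filter Q (map T cl) = map T (filter (Q \<circ> T) cl)" by (simp add: filter_map)
  have sf: "sorted_wrt rd (filter (Q \<circ> T) cl)" using s by (rule sorted_wrt_filter)
  show ?thesis
  proof (cases "filter (Q \<circ> T) cl")
    case Nil
    then have "\<forall>c\<in>set cl. \<not> Q (T c)" by (simp add: filter_empty_conv)
    then show ?thesis using fm Nil by simp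
  next
    case (Cons h t)
    have "h \<in> set (filter (Q \<circ> T) cl)" using Cons by simp
    then have hin: "h \<in> set cl" "Q (T h)" by auto
    have hmin: "\<forall>c\<in>set cl. Q (T c) \<longrightarrow> c \<noteq> h \<longrightarrow> rd h c"
    proof (intro ballI impI)
      fix c assume c: "c \<in> set cl" "Q (T c)" "c \<noteq> h"
      then have "c \<in> set (filter (Q \<circ> T) cl)" by simp
      then have "c \<in> set t" using Cons c(3) by simp
      then show "rd h c" using sf Cons by simp
    qed
    have lhs: "(case filter Q (map T cl) of [] \<Rightarrow> True | a # _ \<Rightarrow> a = v) \<longleftrightarrow> T h = v"
      using fm Cons by simp
    show ?thesis unfolding lhs
    proof
      assume Th: "T h = v"
      show "\<forall>c0\<in>set cl. Q (T c0) \<and> (\<forall>c\<in>set cl. Q (T c) \<longrightarrow> \<not> rd c c0) \<longrightarrow> T c0 = v"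
      proof (intro ballI impI)
        fix c0 assume c0: "c0 \<in> set cl" "Q (T c0) \<and> (\<forall>c\<in>set cl. Q (T c) \<longrightarrow> \<not> rd c c0)"
        have "c0 = h"
        proof (rule ccontr)
          assume "c0 \<noteq> h"
          then have "rd h c0" using hmin c0 by blast
          then show False using c0 hin by blast
        qed
        then show "T c0 = v" using Th by simp
      qed
    next
      assume "\<forall>c0\<in>set cl. Q (T c0) \<and> (\<forall>c\<in>set cl. Q (T c) \<longrightarrow> \<not> rd c c0) \<longrightarrow> T c0 = v"
      moreover have "\<forall>c\<in>set cl. Q (T c) \<longrightarrow> \<not> rd c h" using hmin rd_asym rd_irrefl by metis
      ultimately show "T h = v" using hin by blast
    qed
  qed
qed

definition Acond1 :: "nat \<Rightarrow> (nat \<times> nat) set \<Rightarrow> ((nat \<times> nat) \<Rightarrow> letter) \<Rightarrow> bool" where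
  "Acond1 k D T \<longleftrightarrow> (\<forall>c0\<in>D. fst (T c0) = k \<longrightarrow>
     card {c\<in>D. rd c0 c \<and> T c = (k,False)} \<noteq> card {c\<in>D. rd c0 c \<and> T c = (k-1,False)})"
definition Acond2 :: "nat \<Rightarrow> (nat \<times> nat) set \<Rightarrow> ((nat \<times> nat) \<Rightarrow> letter) \<Rightarrow> bool" where
  "Acond2 k D T \<longleftrightarrow> (\<forall>c0\<in>D. (T c0 = (k-1,False) \<or> T c0 = (k,True)) \<longrightarrow>
     card {c\<in>D. T c = (k,False)} + card {c\<in>D. rd c c0 \<and> T c = (k,True)} \<noteq>
     card {c\<in>D. T c = (k-1,False)} + card {c\<in>D. rd c c0 \<and> T c = (k-1,True)})"
definition Acond3 :: "nat \<Rightarrow> (nat \<times> nat) set \<Rightarrow> ((nat \<times> nat) \<Rightarrow> letter) \<Rightarrow> bool" where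
  "Acond3 k D T \<longleftrightarrow> (\<forall>c0\<in>D. fst (T c0) = k \<and> (\<forall>c\<in>D. fst (T c) = k \<longrightarrow> \<not> rd c c0) \<longrightarrow>
     T c0 = (k,False))"

lemma kam_suff:
  assumes fin: "finite D" and A1: "Acond1 k D T" and A2: "Acond2 k D T"
    and A3: "Acond3 k D T" and A4: "Acond3 (k-1) D T"
  shows "k_amenable k (reading_word D T)"
proof -
  define cl where "cl = rlist D"
  define n where "n = length cl"
  have w: "reading_word D T = map T cl" by (simp add: rw_map cl_def)
  have sc: "sorted_wrt rd cl" and dc: "distinct cl" and sd: "set cl = D"
    using rlist_sorted rlist_distinct rlist_set fin by (auto simp: cl_def)
  have cl_in: "\<And>p. p < n \<Longrightarrow> cl ! p \<in> D" using sd n_def by auto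
  have drp: "\<And>p i. p < n \<Longrightarrow> mcount (map T cl) i (n - p - 1) = card {c\<in>D. rd (cl!p) c \<and> T c = (i,False)}"
  proof -
    fix p i assume p: "p < n"
    have "mcount (map T cl) i (n - p - 1) = count_list (drop (Suc p) (map T cl)) (i, False)"
      using p by (simp add: mcount_def n_def Let_def Suc_diff_Suc)
    also have "\<dots> = count_list (map T (drop (Suc p) cl)) (i, False)" by (simp add: drop_map)
    also have "\<dots> = card {c \<in> set (drop (Suc p) cl). T c = (i,False)}"
      using dc by (simp add: count_map_card)
    also have "\<dots> = card {c\<in>D. rd (cl!p) c \<and> T c = (i,False)}"
      using sorted_drop_set[OF sc rd_irrefl rd_asym, of p] p sd n_def by (simp add: conj_commute) (metis (lifting))
    finally show "mcount (map T cl) i (n - p - 1) = card {c\<in>D. rd (cl!p) c \<and> T c = (i,False)}" .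
  qed
  have tk: "\<And>q i. q < n \<Longrightarrow> mcount (map T cl) i (n + q) =
      card {c\<in>D. T c = (i,False)} + card {c\<in>D. rd c (cl!q) \<and> T c = (i,True)}"
  proof -
    fix q i assume q: "q < n"
    have "mcount (map T cl) i (n + q) = count_list (map T cl) (i,False) + count_list (take q (map T cl)) (i,True)"
      by (cases q) (auto simp: mcount_def n_def Let_def)
    also have "\<dots> = count_list (map T cl) (i,False) + count_list (map T (take q cl)) (i,True)"
      by (simp add: take_map)
    also have "\<dots> = card {c\<in>D. T c = (i,False)} + card {c \<in> set (take q cl). T c = (i,True)}"
      using dc count_map_card[of cl T] count_map_card[of "take q cl" T] sd by simp
    also have "{c \<in> set (take q cl). T c = (i,True)} = {c\<in>D. rd c (cl!q) \<and> T c = (i,True)}"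
      using sorted_take_set[OF sc rd_irrefl rd_asym, of q] q sd n_def by auto
    finally show "mcount (map T cl) i (n + q) =
      card {c\<in>D. T c = (i,False)} + card {c\<in>D. rd c (cl!q) \<and> T c = (i,True)}" .
  qed
  have a: "\<forall>j. j < n \<longrightarrow> mcount (map T cl) k j = mcount (map T cl) (k - 1) j \<longrightarrow>
            map T cl ! (n - j - 1) \<notin> {(k, False), (k, True)}"
  proof (intro allI impI)
    fix j assume j: "j < n" and e: "mcount (map T cl) k j = mcount (map T cl) (k - 1) j"
    define p where "p = n - j - 1"
    have p: "p < n" "j = n - p - 1" using j p_def by auto
    have "card {c\<in>D. rd (cl!p) c \<and> T c = (k,False)} = card {c\<in>D. rd (cl!p) c \<and> T c = (k-1,False)}"
      using e drp[OF p(1)] p(2) by simp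
    then have "fst (T (cl!p)) \<noteq> k" using A1 cl_in[OF p(1)] unfolding Acond1_def by blast
    moreover have "n - j - 1 = p" using p_def by simp
    ultimately show "map T cl ! (n - j - 1) \<notin> {(k, False), (k, True)}" using p(1) n_def by auto
  qed
  have b: "\<forall>j. n \<le> j \<and> j < 2 * n \<longrightarrow> mcount (map T cl) k j = mcount (map T cl) (k - 1) j \<longrightarrow>
            map T cl ! (j - n) \<notin> {(k - 1, False), (k, True)}"
  proof (intro allI impI)
    fix j assume j: "n \<le> j \<and> j < 2 * n" and e: "mcount (map T cl) k j = mcount (map T cl) (k - 1) j"
    define q where "q = j - n"
    have q: "q < n" "j = n + q" using j q_def by auto
    have "card {c\<in>D. T c = (k,False)} + card {c\<in>D. rd c (cl!q) \<and> T c = (k,True)} =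
          card {c\<in>D. T c = (k-1,False)} + card {c\<in>D. rd c (cl!q) \<and> T c = (k-1,True)}"
      using e tk[OF q(1)] q(2) by simp
    then have "\<not> (T (cl!q) = (k-1,False) \<or> T (cl!q) = (k,True))"
      using A2 cl_in[OF q(1)] unfolding Acond2_def by blast
    moreover have "j - n = q" using q_def by simp
    ultimately show "map T cl ! (j - n) \<notin> {(k - 1, False), (k, True)}" using q(1) n_def by auto
  qed
  have c3: "\<And>i. Acond3 i D T \<Longrightarrow>
     (case filter (\<lambda>a. a \<in> {(i, True), (i, False)}) (map T cl) of [] \<Rightarrow> True | a # _ \<Rightarrow> a = (i, False))"
  proof -
    fix i assume A: "Acond3 i D T"
    have e: "\<And>x::letter. x \<in> {(i, True), (i, False)} \<longleftrightarrow> fst x = i" by (case_tac x) auto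
    show "(case filter (\<lambda>a. a \<in> {(i, True), (i, False)}) (map T cl) of [] \<Rightarrow> True | a # _ \<Rightarrow> a = (i, False))"
      unfolding first_filter[OF sc] e using A sd unfolding Acond3_def by simp
  qed
  show ?thesis unfolding k_amenable_def w Let_def length_map n_def[symmetric]
    by (intro conjI; (fact a | fact b | fact c3[OF A3] | fact c3[OF A4]))
qed

lemma kam_nec:
  assumes fin: "finite D" and K: "k_amenable k (reading_word D T)"
  shows "Acond3 k D T \<and> Acond3 (k-1) D T"
proof -
  define cl where "cl = rlist D"
  have w: "reading_word D T = map T cl" by (simp add: rw_map cl_def)
  have sc: "sorted_wrt rd cl" and sd: "set cl = D"
    using rlist_sorted rlist_set fin by (auto simp: cl_def)
  have c3: "\<And>i. (case filter (\<lambda>a. a \<in> {(i, True), (i, False)}) (map T cl) of [] \<Rightarrow> True | a # _ \<Rightarrow> a = (i, False))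
     \<Longrightarrow> Acond3 i D T"
  proof -
    fix i assume A: "(case filter (\<lambda>a. a \<in> {(i, True), (i, False)}) (map T cl) of [] \<Rightarrow> True | a # _ \<Rightarrow> a = (i, False))"
    have e: "\<And>x::letter. x \<in> {(i, True), (i, False)} \<longleftrightarrow> fst x = i" by (case_tac x) auto
    show "Acond3 i D T" using A unfolding first_filter[OF sc] e Acond3_def sd by simp
  qed
  have K': "(case filter (\<lambda>a. a \<in> {(k, True), (k, False)}) (map T cl) of [] \<Rightarrow> True | a # _ \<Rightarrow> a = (k, False))"
     "(case filter (\<lambda>a. a \<in> {(k-1, True), (k-1, False)}) (map T cl) of [] \<Rightarrow> True | a # _ \<Rightarrow> a = (k-1, False))"
    using K unfolding k_amenable_def w Let_def by (simp_all only: conj_assoc)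
  show ?thesis using c3[OF K'(1)] c3[OF K'(2)] by simp
qed




lemma down_induct:
  assumes base: "\<And>d. N \<le> d \<Longrightarrow> P d" and step: "\<And>d. d < N \<Longrightarrow> P (Suc d) \<Longrightarrow> P d"
  shows "P d"
proof (cases "d \<le> N")
  case True
  show ?thesis using True
  proof (induction d rule: inc_induct)
    case base then show ?case using assms(1) by simp
  next
    case (step n) then show ?case using assms(2) by simp
  qed
next
  case False then show ?thesis using base by simp
qed

lemma card_ge_split:
  assumes fin: "finite {e. Q e}"
  shows "card {e. Q e \<and> d \<le> e} = card {e. Q e \<and> Suc d \<le> e} + (if Q d then 1 else 0)"
proof -
  have f: "finite {e. Q e \<and> Suc d \<le> e}" using fin by (rule rev_finite_subset) auto
  show ?thesis
  proof (cases "Q d")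
    case True
    have "{e. Q e \<and> d \<le> e} = insert d {e. Q e \<and> Suc d \<le> e}" using True by auto
    then show ?thesis using True f by simp
  next
    case False
    have "{e. Q e \<and> d \<le> e} = {e. Q e \<and> Suc d \<le> e}" using False by (auto simp: le_less Suc_le_eq)
    then show ?thesis using False by simp
  qed
qed

context sk begin

lemma len_drop1: "0 < d \<Longrightarrow> k \<le> len (d-1) \<Longrightarrow> k - 1 \<le> len d"
  using a_step[of "d-1"] b_mono[of "d-1"] by (cases d) (auto simp: len_def)
lemma len_up: "0 < d \<Longrightarrow> len (d-1) < k \<Longrightarrow> k \<le> len d \<Longrightarrow> b d \<noteq> b (d-1)"
  using a_mono[of "d-1"] by (cases d) (auto simp: len_def)
lemma len_down: "0 < d \<Longrightarrow> k \<le> len (d-1) \<Longrightarrow> len d < k \<Longrightarrow> b d = b (d-1)"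
  using a_step[of "d-1"] b_step[of "d-1"] b_mono[of "d-1"] ba[of "d-1"] by (cases d) (auto simp: len_def)

lemma S_mono: "k' \<le> k \<Longrightarrow> 0 < k' \<Longrightarrow> S k \<subseteq> S k'"
  by (auto simp: S_def)

definition mk :: "((nat \<times> nat) \<Rightarrow> letter) \<Rightarrow> nat \<Rightarrow> nat \<Rightarrow> bool" where
  "mk T d i \<longleftrightarrow> snd (T (cell d i))"

definition firstu :: "((nat \<times> nat) \<Rightarrow> letter) \<Rightarrow> bool" where
  "firstu T \<longleftrightarrow> (\<forall>i d. d \<in> S i \<longrightarrow> (\<forall>d'<d. d' \<notin> S i) \<longrightarrow> \<not> mk T d i)"

lemma fin_lt_W: "(\<And>e. Q e \<Longrightarrow> e < W) \<Longrightarrow> finite {e. Q e}"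
  by (rule finite_subset[of _ "{..<W}"]) auto

lemma S_lt: "d \<in> S i \<Longrightarrow> d < W" using S_sub by auto

definition cU where "cU T i lo = card {d. d \<in> S i \<and> \<not> mk T d i \<and> lo \<le> d}"
definition cM where "cM T i lo = card {d. d \<in> S i \<and> mk T d i \<and> lo \<le> d}"
definition cN where "cN k lo = card {d. d \<in> S (k-1) \<and> d \<notin> S k \<and> lo \<le> d}"

lemma cU_rec: "cU T i d = cU T i (Suc d) + (if d \<in> S i \<and> \<not> mk T d i then 1 else 0)"
  unfolding cU_def using card_ge_split[of "\<lambda>d. d \<in> S i \<and> \<not> mk T d i" d] fin_lt_W[of "\<lambda>d. d \<in> S i \<and> \<not> mk T d i"] S_lt by (simp add: conj_assoc)
lemma cM_rec: "cM T i d = cM T i (Suc d) + (if d \<in> S i \<and> mk T d i then 1 else 0)"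
  unfolding cM_def using card_ge_split[of "\<lambda>d. d \<in> S i \<and> mk T d i" d] fin_lt_W[of "\<lambda>d. d \<in> S i \<and> mk T d i"] S_lt by (simp add: conj_assoc)
lemma cN_rec: "cN k d = cN k (Suc d) + (if d \<in> S (k-1) \<and> d \<notin> S k then 1 else 0)"
  unfolding cN_def using card_ge_split[of "\<lambda>d. d \<in> S (k-1) \<and> d \<notin> S k" d] fin_lt_W[of "\<lambda>d. d \<in> S (k-1) \<and> d \<notin> S k"] S_lt by (simp add: conj_assoc)

lemma cU_W: "W \<le> d \<Longrightarrow> cU T i d = 0" unfolding cU_def using S_lt by fastforce
lemma cM_W: "W \<le> d \<Longrightarrow> cM T i d = 0" unfolding cM_def using S_lt by fastforce
lemma cN_W: "W \<le> d \<Longrightarrow> cN k d = 0" unfolding cN_def using S_lt by fastforce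

lemma fm_mk: "fmark T \<Longrightarrow> d \<in> S i \<Longrightarrow> nonstart d i \<Longrightarrow> mk T d i = (b d \<noteq> b (d-1))"
  unfolding fmark_def mk_def forced_def by auto

lemma potF:
  assumes fm: "fmark T" and k: "2 \<le> k"
  shows "int (cU T k d) + (if 0 < d \<and> d - 1 \<in> S k then 1 else 0) \<le> int (cU T (k-1) d)"
proof (induction d rule: down_induct[where N="Suc W"])
  case (1 d)
  have "\<not> (d - 1 \<in> S k)" using 1 S_lt by fastforce
  then show ?case using 1 by (simp add: cU_W)
next
  case (2 d)
  have k1: "0 < k - 1" using k by simp
  have IH: "int (cU T k (Suc d)) + (if d \<in> S k then 1 else 0) \<le> int (cU T (k-1) (Suc d))"
    using 2 by simp
  note r = cU_rec[of T k d] cU_rec[of T "k-1" d]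
  show ?case
  proof (cases "d \<in> S (k-1)")
    case False
    then have "d \<notin> S k" using S_mono[of "k-1" k] k1 by auto
    moreover have "\<not> (0 < d \<and> d - 1 \<in> S k)"
      using False len_drop1[of d k] k by (auto simp: S_def)
    ultimately show ?thesis using IH r False by auto
  next
    case dkm: True
    show ?thesis
    proof (cases "d \<in> S k")
      case False
      have u: "0 < d \<and> d - 1 \<in> S k \<Longrightarrow> \<not> mk T d (k-1)"
      proof -
        assume h: "0 < d \<and> d - 1 \<in> S k"
        have ns: "nonstart d (k-1)" using h by (auto simp: nonstart_def S_def)
        have "b d = b (d-1)" using h False len_down[of d k] by (auto simp: S_def)
        then show "\<not> mk T d (k-1)" using fm_mk[OF fm dkm ns] by simp
      qed
      show ?thesis using IH r False dkm u by auto
    next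
      case True
      have ns: "0 < d \<and> d - 1 \<in> S k \<Longrightarrow> mk T d k = mk T d (k-1)"
      proof -
        assume h: "0 < d \<and> d - 1 \<in> S k"
        have "nonstart d k" "nonstart d (k-1)" using h by (auto simp: nonstart_def S_def)
        then show ?thesis using fm_mk[OF fm True] fm_mk[OF fm dkm] by simp
      qed
      show ?thesis using IH r True dkm ns by auto
    qed
  qed
qed

lemma potG:
  assumes fm: "fmark T" and fu: "firstu T" and k: "2 \<le> k"
  shows "cM T (k-1) d + (if 0 < d \<and> d - 1 \<in> S k then 1 else 0) \<le> cM T k d + cN k d"
proof (induction d rule: down_induct[where N="Suc W"])
  case (1 d)
  have "\<not> (d - 1 \<in> S k)" using 1 S_lt by fastforce
  then show ?case using 1 by (simp add: cM_W cN_W)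
next
  case (2 d)
  have k1: "0 < k - 1" using k by simp
  have IH: "cM T (k-1) (Suc d) + (if d \<in> S k then 1 else 0) \<le> cM T k (Suc d) + cN k (Suc d)"
    using 2 by simp
  note r = cM_rec[of T k d] cM_rec[of T "k-1" d] cN_rec[of k d]
  show ?case
  proof (cases "d \<in> S (k-1)")
    case False
    then have "d \<notin> S k" using S_mono[of "k-1" k] k1 by auto
    moreover have "\<not> (0 < d \<and> d - 1 \<in> S k)"
      using False len_drop1[of d k] k by (auto simp: S_def)
    ultimately show ?thesis using IH r False by auto
  next
    case dkm: True
    show ?thesis
    proof (cases "d \<in> S k")
      case False
      have u: "0 < d \<and> d - 1 \<in> S k \<Longrightarrow> \<not> mk T d (k-1)"
      proof -
        assume h: "0 < d \<and> d - 1 \<in> S k"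
        have ns: "nonstart d (k-1)" using h by (auto simp: nonstart_def S_def)
        have "b d = b (d-1)" using h False len_down[of d k] by (auto simp: S_def)
        then show "\<not> mk T d (k-1)" using fm_mk[OF fm dkm ns] by simp
      qed
      show ?thesis using IH r False dkm u by auto
    next
      case True
      have ns: "0 < d \<and> d - 1 \<in> S k \<Longrightarrow> mk T d k = mk T d (k-1)"
      proof -
        assume h: "0 < d \<and> d - 1 \<in> S k"
        have "nonstart d k" "nonstart d (k-1)" using h by (auto simp: nonstart_def S_def)
        then show ?thesis using fm_mk[OF fm True] fm_mk[OF fm dkm] by simp
      qed
      have z: "d = 0 \<Longrightarrow> \<not> mk T d k \<and> \<not> mk T d (k-1)"
        using fu True dkm unfolding firstu_def by auto
      show ?thesis using IH r True dkm ns z by auto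
    qed
  qed
qed

end



lemma card_split_lt:
  assumes "finite {d::nat. Q d}"
  shows "card {d. Q d \<and> d < d0} + card {d. Q d \<and> d0 \<le> d} = card {d. Q d}"
proof -
  have e: "{d. Q d} = {d. Q d \<and> d < d0} \<union> {d. Q d \<and> d0 \<le> d}" by auto
  have f: "finite {d. Q d \<and> d < d0}" "finite {d. Q d \<and> d0 \<le> d}"
    using assms by (auto intro: rev_finite_subset)
  have i: "{d. Q d \<and> d < d0} \<inter> {d. Q d \<and> d0 \<le> d} = {}" by auto
  show ?thesis unfolding e using card_Un_disjoint[OF f i] by simp
qed

context sk begin

lemma b_anti_lt: "d < e \<Longrightarrow> b e \<le> b d" using b_anti by simp

lemma rd_same: "rd (cell d k) (cell d' k) \<longleftrightarrow> d < d'"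
proof
  assume "rd (cell d k) (cell d' k)"
  then have "b d' < b d \<or> (b d = b d' \<and> d < d')" by (auto simp: rd_def cell_def)
  then show "d < d'" using b_anti[of d' d] by (cases "d' \<le> d") auto
next
  assume "d < d'"
  then show "rd (cell d k) (cell d' k)" using b_anti[of d d'] by (auto simp: rd_def cell_def)
qed

lemma rd_km_k: "1 \<le> k \<Longrightarrow> rd (cell e (k-1)) (cell d k) \<longleftrightarrow> b d < b e"
proof
  assume k: "1 \<le> k" and "rd (cell e (k-1)) (cell d k)"
  then show "b d < b e" by (auto simp: rd_def cell_def)
next
  assume k: "1 \<le> k" and h: "b d < b e"
  then have "e < d" using b_anti[of d e] by (cases "d \<le> e") auto
  then show "rd (cell e (k-1)) (cell d k)" using h k by (auto simp: rd_def cell_def)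
qed

lemma rd_k_km: "1 \<le> k \<Longrightarrow> rd (cell d k) (cell e (k-1)) \<longleftrightarrow> b e \<le> b d"
proof
  assume k: "1 \<le> k" and "rd (cell d k) (cell e (k-1))"
  then have "b e \<le> b d \<or> (b e = Suc (b d) \<and> d < e)" by (auto simp: rd_def cell_def)
  then show "b e \<le> b d" using b_anti[of d e] by auto
next
  assume k: "1 \<le> k" and h: "b e \<le> b d"
  then show "rd (cell d k) (cell e (k-1))" by (auto simp: rd_def cell_def)
qed

lemma cells_val:
  assumes g: "goodv T" and i: "0 < i"
  shows "card {c\<in>DD. P c \<and> T c = (i,m)} = card {d. d \<in> S i \<and> P (cell d i) \<and> mk T d i = m}"
proof -
  have "{c\<in>DD. P c \<and> T c = (i,m)} = (\<lambda>d. cell d i) ` {d. d \<in> S i \<and> P (cell d i) \<and> mk T d i = m}"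
  proof (rule set_eqI; rule iffI)
    fix c assume c: "c \<in> {c\<in>DD. P c \<and> T c = (i,m)}"
    then have "val c = i" using g by (auto simp: goodv_def)
    then have "c = cell (dg c) i" "dg c \<in> S i" using DD_cell[of c] c by auto
    then show "c \<in> (\<lambda>d. cell d i) ` {d. d \<in> S i \<and> P (cell d i) \<and> mk T d i = m}"
      using c by (intro image_eqI[of _ _ "dg c"]) (auto simp: mk_def)
  next
    fix c assume "c \<in> (\<lambda>d. cell d i) ` {d. d \<in> S i \<and> P (cell d i) \<and> mk T d i = m}"
    then obtain d where d: "c = cell d i" "d \<in> S i" "P (cell d i)" "mk T d i = m" by auto
    have "cell d i \<in> DD" using cell_DD d by simp
    moreover then have "fst (T (cell d i)) = i" using g by (auto simp: goodv_def)
    ultimately show "c \<in> {c\<in>DD. P c \<and> T c = (i,m)}" unfolding d(1) using d(3,4)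
      by (simp add: mk_def prod_eq_iff)
  qed
  moreover have "inj_on (\<lambda>d. cell d i) X" for X using cell_inj by (auto simp: inj_on_def)
  ultimately show ?thesis by (simp add: card_image)
qed

lemma cU0: "card {d. d \<in> S i \<and> \<not> mk T d i} = cU T i 0" by (simp add: cU_def)
lemma cUM: "cU T i 0 + cM T i 0 = card (S i)"
proof -
  have e: "S i = {d. d \<in> S i \<and> \<not> mk T d i} \<union> {d. d \<in> S i \<and> mk T d i}" by auto
  have f: "finite {d. d \<in> S i \<and> \<not> mk T d i}" "finite {d. d \<in> S i \<and> mk T d i}" by auto
  have j: "{d. d \<in> S i \<and> \<not> mk T d i} \<inter> {d. d \<in> S i \<and> mk T d i} = {}" by auto
  have "card (S i) = card {d. d \<in> S i \<and> \<not> mk T d i} + card {d. d \<in> S i \<and> mk T d i}"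
    using card_Un_disjoint[OF f j] e by simp
  then show ?thesis by (simp add: cU_def cM_def)
qed
lemma cN0: "2 \<le> k \<Longrightarrow> card (S (k-1)) = card (S k) + cN k 0"
proof -
  assume k: "2 \<le> k"
  have sub: "S k \<subseteq> S (k-1)" using S_mono[of "k-1" k] k by simp
  have "{d. d \<in> S (k-1) \<and> d \<notin> S k \<and> 0 \<le> d} = S (k-1) - S k" by auto
  then show ?thesis using sub by (simp add: cN_def card_Diff_subset card_mono)
qed
lemma cM_split: "card {d. d \<in> S i \<and> mk T d i \<and> d < d0} + cM T i d0 = cM T i 0"
  unfolding cM_def using card_split_lt[of "\<lambda>d. d \<in> S i \<and> mk T d i" d0] by (simp add: conj_assoc)
lemma cN_anti: "lo \<le> lo' \<Longrightarrow> cN k lo' \<le> cN k lo"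
  unfolding cN_def by (rule card_mono) (auto intro: fin_lt_W simp: S_lt)
lemma cU_anti: "lo \<le> lo' \<Longrightarrow> cU T i lo' \<le> cU T i lo"
  unfolding cU_def by (rule card_mono) (auto intro: fin_lt_W simp: S_lt)

lemma A1_holds:
  assumes g: "goodv T" and fm: "fmark T" and k: "2 \<le> k"
  shows "Acond1 k DD T"
  unfolding Acond1_def
proof (intro ballI impI)
  fix c0 assume c0: "c0 \<in> DD" "fst (T c0) = k"
  then have "val c0 = k" using g by (auto simp: goodv_def)
  then obtain d0 where d0: "c0 = cell d0 k" "d0 \<in> S k" using DD_cell[OF c0(1)] by metis
  have k0: "0 < k" "0 < k - 1" using k by auto
  have L: "card {c\<in>DD. rd c0 c \<and> T c = (k,False)} = cU T k (Suc d0)"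
    unfolding cells_val[OF g k0(1)] d0(1) rd_same cU_def by (rule arg_cong[where f=card]) auto
  have R: "card {c\<in>DD. rd c0 c \<and> T c = (k-1,False)} = card {e. e \<in> S (k-1) \<and> b e \<le> b d0 \<and> \<not> mk T e (k-1)}"
    unfolding cells_val[OF g k0(2)] d0(1) using rd_k_km[of k d0] k by simp
  have "cU T (k-1) d0 \<le> card {e. e \<in> S (k-1) \<and> b e \<le> b d0 \<and> \<not> mk T e (k-1)}"
    unfolding cU_def by (rule card_mono) (auto intro: fin_lt_W simp: S_lt b_anti)
  moreover have "cU T (k-1) (Suc d0) \<le> cU T (k-1) d0" by (rule cU_anti) simp
  moreover have "int (cU T k (Suc d0)) + 1 \<le> int (cU T (k-1) (Suc d0))"
    using potF[OF fm k, of "Suc d0"] d0 by simp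
  ultimately show "card {c\<in>DD. rd c0 c \<and> T c = (k,False)} \<noteq> card {c\<in>DD. rd c0 c \<and> T c = (k-1,False)}"
    using L R by linarith
qed

end



context sk begin

lemma UF: "goodv T \<Longrightarrow> 0 < i \<Longrightarrow> card {c\<in>DD. T c = (i,False)} = cU T i 0"
  using cells_val[of T i "\<lambda>_. True" False] by (simp add: cU_def)

lemma val_cell_DD: "goodv T \<Longrightarrow> c0 \<in> DD \<Longrightarrow> fst (T c0) = i \<Longrightarrow> \<exists>d0. c0 = cell d0 i \<and> d0 \<in> S i"
proof -
  assume g: "goodv T" and c0: "c0 \<in> DD" "fst (T c0) = i"
  then have "val c0 = i" by (auto simp: goodv_def)
  then show ?thesis using DD_cell[OF c0(1)] by metis
qed

lemma A2_holds:
  assumes g: "goodv T" and fm: "fmark T" and fu: "firstu T" and k: "2 \<le> k"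
  shows "Acond2 k DD T"
  unfolding Acond2_def
proof (intro ballI impI)
  fix c0 assume c0: "c0 \<in> DD" and tc: "T c0 = (k-1,False) \<or> T c0 = (k,True)"
  have k0: "0 < k" "0 < k - 1" "1 \<le> k" using k by auto
  have SS: "card (S (k-1)) = card (S k) + cN k 0" using cN0[OF k] .
  have UMk: "cU T k 0 + cM T k 0 = card (S k)" and UMk1: "cU T (k-1) 0 + cM T (k-1) 0 = card (S (k-1))"
    using cUM by auto
  show "card {c\<in>DD. T c = (k,False)} + card {c\<in>DD. rd c c0 \<and> T c = (k,True)} \<noteq>
     card {c\<in>DD. T c = (k-1,False)} + card {c\<in>DD. rd c c0 \<and> T c = (k-1,True)}"
    (is "?X \<noteq> ?Y")
  proof (cases "T c0 = (k,True)")
    case True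
    obtain d0 where d0: "c0 = cell d0 k" "d0 \<in> S k" using val_cell_DD[OF g c0, of k] True by auto
    have mk0: "mk T d0 k" using True d0 by (simp add: mk_def)
    have bd: "0 < d0 \<and> b d0 \<noteq> b (d0-1)"
    proof (cases "nonstart d0 k")
      case True then show ?thesis using fm_mk[OF fm d0(2) True] mk0 by (simp add: nonstart_def)
    next
      case False
      have "d0 \<noteq> 0" using fu d0(2) mk0 unfolding firstu_def by auto
      then show ?thesis using False len_up[of d0 k] d0(2) by (auto simp: nonstart_def S_def)
    qed
    have ebd: "e < d0 \<longleftrightarrow> b d0 < b e" for e
    proof
      assume "e < d0"
      then have "b (d0-1) \<le> b e" using b_anti[of e "d0-1"] by simp
      moreover have "b d0 \<le> b (d0-1)" using b_anti[of "d0-1" d0] by simp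
      ultimately show "b d0 < b e" using bd by simp
    next
      assume "b d0 < b e" then show "e < d0" using b_anti[of d0 e] by (cases "d0 \<le> e") auto
    qed
    have X2: "card {c\<in>DD. rd c c0 \<and> T c = (k,True)} = card {d. d \<in> S k \<and> mk T d k \<and> d < d0}"
      unfolding cells_val[OF g k0(1)] d0(1) rd_same by (rule arg_cong[where f=card]) auto
    have Y2: "card {c\<in>DD. rd c c0 \<and> T c = (k-1,True)} = card {d. d \<in> S (k-1) \<and> mk T d (k-1) \<and> d < d0}"
      unfolding cells_val[OF g k0(2)] d0(1) rd_km_k[OF k0(3)] ebd by (rule arg_cong[where f=card]) auto
    have s1: "card {d. d \<in> S k \<and> mk T d k \<and> d < d0} + cM T k d0 = cM T k 0" by (rule cM_split)
    have s2: "card {d. d \<in> S (k-1) \<and> mk T d (k-1) \<and> d < d0} + cM T (k-1) d0 = cM T (k-1) 0" by (rule cM_split)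
    have p: "cM T (k-1) (Suc d0) + 1 \<le> cM T k (Suc d0) + cN k (Suc d0)"
      using potG[OF fm fu k, of "Suc d0"] d0(2) by simp
    have r1: "cM T k d0 = cM T k (Suc d0) + 1" using cM_rec[of T k d0] d0(2) mk0 by simp
    have r2: "cM T (k-1) d0 \<le> cM T (k-1) (Suc d0) + 1" using cM_rec[of T "k-1" d0] by simp
    have r3: "cN k (Suc d0) \<le> cN k 0" by (rule cN_anti) simp
    have "?X < ?Y" using UF[OF g k0(1)] UF[OF g k0(2)] X2 Y2 s1 s2 p r1 r2 r3 SS UMk UMk1 by linarith
    then show ?thesis by simp
  next
    case False
    then have tc': "T c0 = (k-1,False)" using tc by simp
    obtain e0 where e0: "c0 = cell e0 (k-1)" "e0 \<in> S (k-1)" using val_cell_DD[OF g c0, of "k-1"] tc' by auto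
    have mk0: "\<not> mk T e0 (k-1)" using tc' e0 by (simp add: mk_def)
    have rdk: "rd (cell d k) (cell e0 (k-1)) \<longleftrightarrow> b e0 \<le> b d" for d using rd_k_km[OF k0(3)] by simp
    have rdk1: "rd (cell e (k-1)) (cell e0 (k-1)) \<longleftrightarrow> e < e0" for e using rd_same by simp
    have seteq: "{d. d \<in> S k \<and> b e0 \<le> b d \<and> mk T d k} = {d. d \<in> S k \<and> mk T d k \<and> d < Suc e0}"
    proof (rule set_eqI; rule iffI)
      fix d assume "d \<in> {d. d \<in> S k \<and> b e0 \<le> b d \<and> mk T d k}"
      then have d: "d \<in> S k" "b e0 \<le> b d" "mk T d k" by auto
      have "d \<le> e0"
      proof (rule ccontr)
        assume "\<not> d \<le> e0"
        then have de: "e0 \<le> d - 1" "0 < d" by auto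
        have "b d \<le> b (d-1)" "b (d-1) \<le> b e0" using b_anti[of "d-1" d] b_anti[OF de(1)] by auto
        then have eq: "b d = b (d-1)" using d(2) by simp
        show False
        proof (cases "nonstart d k")
          case True then show False using fm_mk[OF fm d(1) True] d(3) eq by simp
        next
          case False then show False using len_up[of d k] de(2) d(1) eq by (auto simp: nonstart_def S_def)
        qed
      qed
      then show "d \<in> {d. d \<in> S k \<and> mk T d k \<and> d < Suc e0}" using d by auto
    next
      fix d assume "d \<in> {d. d \<in> S k \<and> mk T d k \<and> d < Suc e0}"
      then show "d \<in> {d. d \<in> S k \<and> b e0 \<le> b d \<and> mk T d k}" using b_anti[of d e0] by auto
    qed
    have X2: "card {c\<in>DD. rd c c0 \<and> T c = (k,True)} = card {d. d \<in> S k \<and> mk T d k \<and> d < Suc e0}"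
      unfolding cells_val[OF g k0(1)] e0(1) rdk seteq[symmetric] by (rule arg_cong[where f=card]) auto
    have Y2: "card {c\<in>DD. rd c c0 \<and> T c = (k-1,True)} = card {d. d \<in> S (k-1) \<and> mk T d (k-1) \<and> d < e0}"
      unfolding cells_val[OF g k0(2)] e0(1) rdk1 by (rule arg_cong[where f=card]) auto
    have s1: "card {d. d \<in> S k \<and> mk T d k \<and> d < Suc e0} + cM T k (Suc e0) = cM T k 0" by (rule cM_split)
    have s2: "card {d. d \<in> S (k-1) \<and> mk T d (k-1) \<and> d < e0} + cM T (k-1) e0 = cM T (k-1) 0" by (rule cM_split)
    have r2: "cM T (k-1) e0 = cM T (k-1) (Suc e0)" using cM_rec[of T "k-1" e0] mk0 by simp
    have key: "cM T (k-1) (Suc e0) < cM T k (Suc e0) + cN k 0"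
    proof (cases "e0 \<in> S k")
      case True
      have "cM T (k-1) (Suc e0) + 1 \<le> cM T k (Suc e0) + cN k (Suc e0)"
        using potG[OF fm fu k, of "Suc e0"] True by simp
      moreover have "cN k (Suc e0) \<le> cN k 0" by (rule cN_anti) simp
      ultimately show ?thesis by linarith
    next
      case False
      have "cM T (k-1) (Suc e0) \<le> cM T k (Suc e0) + cN k (Suc e0)"
        using potG[OF fm fu k, of "Suc e0"] by simp
      moreover have "cN k e0 = cN k (Suc e0) + 1" using cN_rec[of k e0] False e0(2) by simp
      moreover have "cN k e0 \<le> cN k 0" by (rule cN_anti) simp
      ultimately show ?thesis by linarith
    qed
    have "?X < ?Y" using UF[OF g k0(1)] UF[OF g k0(2)] X2 Y2 s1 s2 r2 key SS UMk UMk1 by linarith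
    then show ?thesis by simp
  qed
qed

end



lemma content_cong: "(\<forall>c\<in>D. fst (f c) = fst (g c)) \<Longrightarrow> content D f = content D g"
proof -
  assume h: "\<forall>c\<in>D. fst (f c) = fst (g c)"
  have "(\<lambda>c. fst (f c)) ` D = (\<lambda>c. fst (g c)) ` D" using h by (auto simp: image_iff)
  moreover have "\<And>i. {c\<in>D. fst (f c) = i} = {c\<in>D. fst (g c) = i}" using h by auto
  ultimately show ?thesis unfolding content_def by simp
qed

context sk begin

lemma firstu_A3:
  assumes g: "goodv T" and fu: "firstu T" and i: "0 < i"
  shows "Acond3 i DD T"
  unfolding Acond3_def
proof (intro ballI impI)
  fix c0 assume c0: "c0 \<in> DD" and h: "fst (T c0) = i \<and> (\<forall>c\<in>DD. fst (T c) = i \<longrightarrow> \<not> rd c c0)"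
  obtain d0 where d0: "c0 = cell d0 i" "d0 \<in> S i" using val_cell_DD[OF g c0] h by auto
  have "\<forall>d'<d0. d' \<notin> S i"
  proof (intro allI impI)
    fix d' assume d': "d' < d0"
    show "d' \<notin> S i"
    proof
      assume "d' \<in> S i"
      then have "cell d' i \<in> DD" "fst (T (cell d' i)) = i" using cell_DD g by (auto simp: goodv_def)
      then show False using h d' d0(1) rd_same by auto
    qed
  qed
  then have "\<not> mk T d0 i" using fu d0(2) unfolding firstu_def by blast
  then show "T c0 = (i, False)" using h unfolding d0(1) by (simp add: mk_def prod_eq_iff)
qed

lemma A3_firstu:
  assumes g: "goodv T" and A: "\<And>i. 0 < i \<Longrightarrow> Acond3 i DD T"
  shows "firstu T"
  unfolding firstu_def
proof (intro allI impI)
  fix i d assume d: "d \<in> S i" and fst: "\<forall>d'<d. d' \<notin> S i"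
  have i: "0 < i" using d by (simp add: S_def)
  have c: "cell d i \<in> DD" "fst (T (cell d i)) = i" using cell_DD[OF d] g by (auto simp: goodv_def)
  have "\<forall>c\<in>DD. fst (T c) = i \<longrightarrow> \<not> rd c (cell d i)"
  proof (intro ballI impI)
    fix c assume "c \<in> DD" "fst (T c) = i"
    then obtain d' where "c = cell d' i" "d' \<in> S i" using val_cell_DD[OF g] by blast
    then show "\<not> rd c (cell d i)" using fst rd_same by auto
  qed
  then have "T (cell d i) = (i, False)" using A[OF i] c unfolding Acond3_def by blast
  then show "\<not> mk T d i" by (simp add: mk_def)
qed

lemma amen_iff:
  assumes g: "goodv T" and fm: "fmark T"
  shows "amenable DD T \<longleftrightarrow> firstu T"
proof
  assume am: "amenable DD T"
  have "\<And>i. 0 < i \<Longrightarrow> Acond3 i DD T"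
  proof -
    fix i :: nat assume "0 < i"
    then have "k_amenable (Suc i) (reading_word DD T)" using am unfolding amenable_def by simp
    then show "Acond3 i DD T" using kam_nec[OF DD_fin] by fastforce
  qed
  then show "firstu T" using A3_firstu[OF g] by blast
next
  assume fu: "firstu T"
  show "amenable DD T" unfolding amenable_def
  proof (intro allI impI)
    fix k :: nat assume "1 < k"
    then have k: "2 \<le> k" by simp
    show "k_amenable k (reading_word DD T)"
      by (rule kam_suff[OF DD_fin A1_holds[OF g fm k] A2_holds[OF g fm fu k]
            firstu_A3[OF g fu] firstu_A3[OF g fu]]) (use k in auto)
  qed
qed

definition dflt :: "((nat \<times> nat) \<Rightarrow> letter) \<Rightarrow> bool" where
  "dflt T \<longleftrightarrow> (\<forall>c. c \<notin> DD \<longrightarrow> T c = (0, False))"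

definition FS where
  "FS = {T. tableau DD T \<and> amenable DD T \<and> content DD T = content DD (Ttab DD) \<and>
              (\<forall>c. c \<notin> DD \<longrightarrow> T c = (0, False))}"

lemma FS_char: "T \<in> FS \<longleftrightarrow> goodv T \<and> fmark T \<and> firstu T \<and> dflt T"
proof
  assume "T \<in> FS"
  then have T: "tableau DD T" "amenable DD T" "content DD T = content DD (Ttab DD)" "dflt T"
    by (auto simp: FS_def dflt_def)
  have g: "goodv T" using vals_eq[OF T(1,3)] .
  have fm: "fmark T" using tab_iff[OF g] T(1) by simp
  show "goodv T \<and> fmark T \<and> firstu T \<and> dflt T" using g fm amen_iff[OF g fm] T by simp
next
  assume h: "goodv T \<and> fmark T \<and> firstu T \<and> dflt T"
  then have "tableau DD T" "amenable DD T" using tab_iff amen_iff by auto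
  moreover have "content DD T = content DD (Ttab DD)"
    using h Ttab_DD by (intro content_cong) (simp add: goodv_def)
  ultimately show "T \<in> FS" using h by (simp add: FS_def dflt_def)
qed

definition FF :: "(nat \<times> nat) set" where
  "FF = {(d,i). d \<in> S i \<and> \<not> nonstart d i \<and> (\<exists>d'<d. d' \<in> S i)}"

definition mkT :: "(nat \<times> nat) set \<Rightarrow> (nat \<times> nat) \<Rightarrow> letter" where
  "mkT G c = (if c \<in> DD then (val c, if (dg c, val c) \<in> FF then (dg c, val c) \<in> G else forced (dg c) (val c))
              else (0, False))"

lemma FF_fin: "finite FF"
proof -
  have "FF \<subseteq> {..<W} \<times> {..a 0}"
  proof
    fix x assume "x \<in> FF"
    then obtain d i where x: "x = (d,i)" "d \<in> S i" by (auto simp: FF_def)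
    then have "i \<le> a d" "a d \<le> a 0" using a_anti[of 0 d] by (auto simp: S_def len_def)
    then show "x \<in> {..<W} \<times> {..a 0}" using x S_lt by auto
  qed
  then show ?thesis using finite_subset by blast
qed

lemma mkT_cell: "d \<in> S i \<Longrightarrow> mkT G (cell d i) = (i, if (d,i) \<in> FF then (d,i) \<in> G else forced d i)"
  using cell_DD by (simp add: mkT_def)

lemma mkT_FS: "mkT G \<in> FS"
proof -
  have g: "goodv (mkT G)" by (simp add: goodv_def mkT_def)
  have fm: "fmark (mkT G)" unfolding fmark_def
  proof (intro allI impI)
    fix d i assume d: "d \<in> S i" and ns: "nonstart d i"
    then have "(d,i) \<notin> FF" by (simp add: FF_def)
    then show "snd (mkT G (cell d i)) = forced d i" using mkT_cell[OF d] by simp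
  qed
  have fu: "firstu (mkT G)" unfolding firstu_def
  proof (intro allI impI)
    fix i d assume d: "d \<in> S i" and f: "\<forall>d'<d. d' \<notin> S i"
    then have "(d,i) \<notin> FF" by (auto simp: FF_def)
    moreover have "\<not> forced d i"
    proof
      assume "forced d i"
      then have "0 < d" "i \<le> len (d-1)" by (auto simp: forced_def nonstart_def)
      then show False using f d by (auto simp: S_def)
    qed
    ultimately show "\<not> mk (mkT G) d i" using mkT_cell[OF d] by (simp add: mk_def)
  qed
  have df: "dflt (mkT G)" by (simp add: dflt_def mkT_def)
  show ?thesis using FS_char g fm fu df by simp
qed

lemma FS_mkT:
  assumes "T \<in> FS"
  shows "T = mkT {x\<in>FF. mk T (fst x) (snd x)}"
proof
  fix c
  have h: "goodv T" "fmark T" "firstu T" "dflt T" using assms FS_char by auto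
  show "T c = mkT {x\<in>FF. mk T (fst x) (snd x)} c"
  proof (cases "c \<in> DD")
    case False
    then have "T c = (0,False)" using h(4) unfolding dflt_def by blast
    then show ?thesis using False unfolding mkT_def by simp
  next
    case True
    obtain d i where c: "c = cell d i" "d \<in> S i" using DD_cell[OF True] by blast
    have f: "fst (T c) = i" using h(1) True c by (simp add: goodv_def)
    have s: "snd (T c) = (if (d,i) \<in> FF then (d,i) \<in> {x\<in>FF. mk T (fst x) (snd x)} else forced d i)"
    proof (cases "(d,i) \<in> FF")
      case True then show ?thesis using c by (simp add: mk_def)
    next
      case False
      show ?thesis
      proof (cases "nonstart d i")
        case True then show ?thesis using False h(2) c unfolding fmark_def by simp
      next
        case ns: False
        then have "\<forall>d'<d. d' \<notin> S i" using False c(2) by (auto simp: FF_def)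
        then have "\<not> mk T d i" using h(3) c(2) unfolding firstu_def by blast
        then show ?thesis using False ns c by (simp add: mk_def forced_def)
      qed
    qed
    show ?thesis using f s mkT_cell[OF c(2), of "{x\<in>FF. mk T (fst x) (snd x)}"] unfolding c(1)
      by (simp add: prod_eq_iff)
  qed
qed

lemma mkT_inj: "inj_on mkT (Pow FF)"
proof (rule inj_onI)
  fix G1 G2 assume G: "G1 \<in> Pow FF" "G2 \<in> Pow FF" and e: "mkT G1 = mkT G2"
  show "G1 = G2"
  proof (rule set_eqI)
    fix x
    show "x \<in> G1 \<longleftrightarrow> x \<in> G2"
    proof (cases "x \<in> FF")
      case True
      obtain d i where x: "x = (d,i)" "d \<in> S i" using True by (auto simp: FF_def)
      have "mkT G1 (cell d i) = mkT G2 (cell d i)" using e by simp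
      then show ?thesis using mkT_cell[OF x(2)] True x(1) by simp
    next
      case False then show ?thesis using G by auto
    qed
  qed
qed

lemma FS_image: "FS = mkT ` Pow FF"
proof
  show "FS \<subseteq> mkT ` Pow FF"
  proof
    fix T assume "T \<in> FS"
    then show "T \<in> mkT ` Pow FF" using FS_mkT by (intro image_eqI[of _ _ "{x\<in>FF. mk T (fst x) (snd x)}"]) auto
  qed
  show "mkT ` Pow FF \<subseteq> FS" using mkT_FS by auto
qed

lemma card_FS: "card FS = 2 ^ card FF"
  using FS_image card_image[OF mkT_inj] card_Pow FF_fin by simp

end



context sk begin

primrec stf :: "nat \<Rightarrow> nat \<Rightarrow> nat" where
  "stf i 0 = 0"
| "stf i (Suc d) = (if nonstart (Suc d) i then stf i d else Suc d)"

definition starts :: "nat \<Rightarrow> nat set" where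
  "starts i = {d \<in> S i. \<not> nonstart d i}"

lemma stf_prop: "d \<in> S i \<Longrightarrow> stf i d \<in> starts i \<and> stf i d \<le> d \<and> (cell d i, cell (stf i d) i) \<in> {(x,y). x \<in> Pk DD i \<and> y \<in> Pk DD i \<and> adjacent x y}\<^sup>*"
proof (induction d)
  case 0 then show ?case by (simp add: starts_def nonstart_def)
next
  case (Suc d)
  show ?case
  proof (cases "nonstart (Suc d) i")
    case False then show ?thesis using Suc.prems by (simp add: starts_def)
  next
    case True
    have dS: "d \<in> S i" using True Suc.prems by (simp add: nonstart_def S_def)
    have IH: "stf i d \<in> starts i \<and> stf i d \<le> d \<and> (cell d i, cell (stf i d) i) \<in> {(x,y). x \<in> Pk DD i \<and> y \<in> Pk DD i \<and> adjacent x y}\<^sup>*"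
      using Suc.IH[OF dS] .
    have adj: "adjacent (cell (Suc d) i) (cell d i)"
    proof (cases "b (Suc d) = b d")
      case True then show ?thesis by (simp add: adjacent_def cell_def)
    next
      case False
      then have "b d = Suc (b (Suc d))" using b_step[of d] b_mono[of d] by simp
      then show ?thesis by (simp add: adjacent_def cell_def)
    qed
    have "(cell (Suc d) i, cell d i) \<in> {(x,y). x \<in> Pk DD i \<and> y \<in> Pk DD i \<and> adjacent x y}"
      using adj cell_in_Pk[OF dS] cell_in_Pk[OF Suc.prems] by simp
    then show ?thesis using IH True by (auto intro: converse_rtrancl_into_rtrancl)
  qed
qed

lemma stf_start: "s \<in> starts i \<Longrightarrow> stf i s = s"
  by (cases s) (auto simp: starts_def)

lemma adj_cells: "adjacent (cell d i) (cell d' i) \<Longrightarrow> d' = Suc d \<or> d = Suc d'"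
  by (auto simp: adjacent_def cell_def)

lemma stf_adj:
  assumes "d \<in> S i" "d' \<in> S i" "adjacent (cell d i) (cell d' i)"
  shows "stf i d = stf i d'"
proof -
  have ns: "nonstart (Suc e) i" if "e \<in> S i" for e using that by (simp add: nonstart_def S_def)
  show ?thesis using adj_cells[OF assms(3)] ns assms(1,2) by auto
qed

lemma Pk_dg: "0 < i \<Longrightarrow> x \<in> Pk DD i \<Longrightarrow> x = cell (dg x) i \<and> dg x \<in> S i"
  using Pk_cell[of i] by auto

lemma rtr_stf:
  assumes i: "0 < i"
  shows "(x,y) \<in> {(x,y). x \<in> Pk DD i \<and> y \<in> Pk DD i \<and> adjacent x y}\<^sup>* \<Longrightarrow> x \<in> Pk DD i \<Longrightarrow>
     y \<in> Pk DD i \<and> stf i (dg x) = stf i (dg y)"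
proof (induction rule: rtrancl_induct)
  case base then show ?case by simp
next
  case (step y z)
  then have yz: "y \<in> Pk DD i" "z \<in> Pk DD i" "adjacent y z" by auto
  have y: "y = cell (dg y) i" "dg y \<in> S i" using Pk_dg[OF i yz(1)] by auto
  have z: "z = cell (dg z) i" "dg z \<in> S i" using Pk_dg[OF i yz(2)] by auto
  have "adjacent (cell (dg y) i) (cell (dg z) i)" using yz(3) y(1) z(1) by simp
  then have "stf i (dg y) = stf i (dg z)" using stf_adj y(2) z(2) by blast
  then show ?case using step.IH step.prems yz(2) by simp
qed

lemma comp_starts:
  assumes i: "0 < i"
  shows "comp (Pk DD i) = card (starts i)"
proof -
  define R where "R = {(x,y). x \<in> Pk DD i \<and> y \<in> Pk DD i \<and> adjacent x y}"
  have symR: "sym R" by (auto simp: R_def sym_def adjacent_def)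
  have eq: "equiv UNIV (R\<^sup>*)" by (simp add: equiv_def refl_rtrancl sym_rtrancl[OF symR] trans_rtrancl)
  have "{(a, b). a \<in> Pk DD i \<and> b \<in> Pk DD i \<and> adjacent a b} = R" by (simp add: R_def)
  then have c: "comp (Pk DD i) = card (Pk DD i // R\<^sup>*)" by (simp add: comp_def)
  have img: "Pk DD i // R\<^sup>* = (\<lambda>s. R\<^sup>* `` {cell s i}) ` starts i"
  proof
    show "Pk DD i // R\<^sup>* \<subseteq> (\<lambda>s. R\<^sup>* `` {cell s i}) ` starts i"
    proof
      fix X assume "X \<in> Pk DD i // R\<^sup>*"
      then obtain x where x: "x \<in> Pk DD i" "X = R\<^sup>* `` {x}" by (auto simp: quotient_def)
      then have xd: "x = cell (dg x) i" "dg x \<in> S i" using Pk_dg[OF i] by auto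
      have sp: "stf i (dg x) \<in> starts i" "(x, cell (stf i (dg x)) i) \<in> R\<^sup>*"
        using stf_prop[OF xd(2)] xd(1) unfolding R_def by auto
      have "X = R\<^sup>* `` {cell (stf i (dg x)) i}" using x(2) equiv_class_eq[OF eq sp(2)] by simp
      then show "X \<in> (\<lambda>s. R\<^sup>* `` {cell s i}) ` starts i" using sp(1) by auto
    qed
    show "(\<lambda>s. R\<^sup>* `` {cell s i}) ` starts i \<subseteq> Pk DD i // R\<^sup>*"
    proof
      fix X assume "X \<in> (\<lambda>s. R\<^sup>* `` {cell s i}) ` starts i"
      then obtain s where s: "s \<in> starts i" "X = R\<^sup>* `` {cell s i}" by auto
      then have "cell s i \<in> Pk DD i" using cell_in_Pk by (simp add: starts_def)
      then show "X \<in> Pk DD i // R\<^sup>*" using s by (auto simp: quotient_def)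
    qed
  qed
  have inj: "inj_on (\<lambda>s. R\<^sup>* `` {cell s i}) (starts i)"
  proof (rule inj_onI)
    fix s s' assume s: "s \<in> starts i" "s' \<in> starts i" and e: "R\<^sup>* `` {cell s i} = R\<^sup>* `` {cell s' i}"
    have "(cell s i, cell s' i) \<in> R\<^sup>*" using e eq_equiv_class_iff[OF eq UNIV_I UNIV_I] by simp
    moreover have "cell s i \<in> Pk DD i" using cell_in_Pk s by (simp add: starts_def)
    ultimately have "cell s' i \<in> Pk DD i \<and> stf i (dg (cell s i)) = stf i (dg (cell s' i))"
      using rtr_stf[OF i, of "cell s i" "cell s' i"] unfolding R_def by blast
    then have "stf i s = stf i s'" by simp
    then show "s = s'" using stf_start s by simp
  qed
  show ?thesis using c img card_image[OF inj] by simp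
qed

end



context sk begin

definition LL where "LL = length (content DD (Ttab DD))"

lemma LL_eq: "LL = (if DD = {} then 0 else Max (val ` DD))"
proof -
  have "(\<lambda>c. fst (Ttab DD c)) ` DD = val ` DD" using Ttab_DD by (auto simp: image_iff)
  then show ?thesis by (simp add: LL_def content_def Let_def)
qed

lemma val_le_LL: "c \<in> DD \<Longrightarrow> val c \<le> LL"
  using LL_eq by (auto intro: Max_ge)

lemma S_ne: "1 \<le> i \<Longrightarrow> i \<le> LL \<Longrightarrow> S i \<noteq> {}"
proof -
  assume i: "1 \<le> i" "i \<le> LL"
  then have ne: "DD \<noteq> {}" using LL_eq by (auto split: if_splits)
  then have "LL \<in> val ` DD" using LL_eq Max_in[of "val ` DD"] by simp
  then obtain c where c: "c \<in> DD" "val c = LL" by auto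
  then have "dg c \<in> S LL" using DD_cell[OF c(1)] by simp
  then have "dg c \<in> S i" using S_mono[of i LL] i by auto
  then show ?thesis by auto
qed

lemma Min_start: "S i \<noteq> {} \<Longrightarrow> Min (S i) \<in> starts i"
proof -
  assume ne: "S i \<noteq> {}"
  have m: "Min (S i) \<in> S i" using Min_in[OF S_fin ne] .
  have "\<not> nonstart (Min (S i)) i"
  proof
    assume "nonstart (Min (S i)) i"
    then have "Min (S i) - 1 \<in> S i" "0 < Min (S i)" using m by (auto simp: nonstart_def S_def)
    then have "Min (S i) \<le> Min (S i) - 1" "0 < Min (S i)" using Min_le[OF S_fin] by auto
    then show False by simp
  qed
  then show ?thesis using m by (simp add: starts_def)
qed

lemma FF_eq: "FF = (\<Union>i\<in>{1..LL}. (\<lambda>d. (d,i)) ` (starts i - {Min (S i)}))"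
proof (rule set_eqI; rule iffI)
  fix x assume x: "x \<in> FF"
  then obtain d i where di: "x = (d,i)" "d \<in> S i" "\<not> nonstart d i" "\<exists>d'<d. d' \<in> S i"
    by (auto simp: FF_def)
  have i: "1 \<le> i" "i \<le> LL" using di(2) val_le_LL[OF cell_DD[OF di(2)]] by (auto simp: S_def)
  obtain d' where d': "d' < d" "d' \<in> S i" using di(4) by blast
  have md: "Min (S i) \<le> d'" using Min_le[OF S_fin d'(2)] .
  have "d \<noteq> Min (S i)" using md d'(1) by linarith
  then show "x \<in> (\<Union>i\<in>{1..LL}. (\<lambda>d. (d,i)) ` (starts i - {Min (S i)}))"
    using di i by (auto simp: starts_def)
next
  fix x assume "x \<in> (\<Union>i\<in>{1..LL}. (\<lambda>d. (d,i)) ` (starts i - {Min (S i)}))"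
  then obtain i d where x: "x = (d,i)" "d \<in> starts i" "d \<noteq> Min (S i)" by auto
  have dS: "d \<in> S i" "\<not> nonstart d i" using x by (auto simp: starts_def)
  have md: "Min (S i) \<le> d" using Min_le[OF S_fin dS(1)] .
  have "Min (S i) < d" using md x(3) by linarith
  moreover have "Min (S i) \<in> S i" using Min_in[OF S_fin] dS(1) by blast
  ultimately show "x \<in> FF" using x dS by (auto simp: FF_def)
qed

lemma card_FF: "card FF = (\<Sum>i\<in>{1..LL}. card (starts i) - 1)"
proof -
  have "card FF = (\<Sum>i\<in>{1..LL}. card ((\<lambda>d. (d,i)) ` (starts i - {Min (S i)})))"
    unfolding FF_eq by (rule card_UN_disjoint) (auto simp: starts_def)
  also have "\<dots> = (\<Sum>i\<in>{1..LL}. card (starts i) - 1)"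
  proof (rule sum.cong)
    fix i assume i: "i \<in> {1..LL}"
    have "card ((\<lambda>d. (d,i)) ` (starts i - {Min (S i)})) = card (starts i - {Min (S i)})"
      by (rule card_image) (auto simp: inj_on_def)
    also have "\<dots> = card (starts i) - 1"
      using Min_start[OF S_ne] i by (simp add: starts_def)
    finally show "card ((\<lambda>d. (d,i)) ` (starts i - {Min (S i)})) = card (starts i) - 1" .
  qed simp
  finally show ?thesis .
qed

lemma main_loc: "card FS = (\<Prod>i = 1..LL. 2 ^ (comp (Pk DD i) - 1))"
proof -
  have "card FS = 2 ^ (\<Sum>i\<in>{1..LL}. card (starts i) - 1)" using card_FS card_FF by simp
  also have "\<dots> = (\<Prod>i = 1..LL. 2 ^ (card (starts i) - 1))" by (simp add: power_sum)
  also have "\<dots> = (\<Prod>i = 1..LL. 2 ^ (comp (Pk DD i) - 1))"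
    by (rule prod.cong) (auto simp: comp_starts)
  finally show ?thesis .
qed

end

theorem proposition3p5:
  fixes lam mu :: "nat list"
  assumes "DP lam" and "DP mu"
    and "shifted_diagram mu \<subseteq> shifted_diagram lam"
  shows "fcoef lam mu (content (skew_diagram lam mu) (Ttab (skew_diagram lam mu))) =
         (\<Prod>i = 1..length (content (skew_diagram lam mu) (Ttab (skew_diagram lam mu))).
            2 ^ (comp (Pk (skew_diagram lam mu) i) - 1))"
proof -
  define a where "a = (\<lambda>d. cntp d lam)"
  define b where "b = (\<lambda>d. cntp d mu)"
  have sl: "sorted_wrt (>) lam" and sm: "sorted_wrt (>) mu" using assms by (auto simp: DP_def)
  have SL: "shifted_diagram lam = {(x,y). 1 \<le> x \<and> x \<le> y \<and> x \<le> a (y-x)}"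
    using shifted_char[OF assms(1)] by (simp add: a_def)
  have SM: "shifted_diagram mu = {(x,y). 1 \<le> x \<and> x \<le> y \<and> x \<le> b (y-x)}"
    using shifted_char[OF assms(2)] by (simp add: b_def)
  have ba: "b d \<le> a d" for d
  proof (rule ccontr)
    assume "\<not> b d \<le> a d"
    then have "(b d, b d + d) \<in> shifted_diagram mu" unfolding SM by auto
    then have "(b d, b d + d) \<in> shifted_diagram lam" using assms(3) by auto
    then show False using \<open>\<not> b d \<le> a d\<close> unfolding SL by auto
  qed
  interpret sk a b "sum_list lam"
  proof
    show "\<And>d. a (Suc d) \<le> a d" by (simp add: a_def cntp_mono)
    show "\<And>d. a d \<le> Suc (a (Suc d))" by (simp add: a_def cntp_step[OF sl])
    show "\<And>d. b (Suc d) \<le> b d" by (simp add: b_def cntp_mono)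
    show "\<And>d. b d \<le> Suc (b (Suc d))" by (simp add: b_def cntp_step[OF sm])
    show "\<And>d. b d \<le> a d" by (rule ba)
    show "\<And>d. sum_list lam \<le> d \<Longrightarrow> a d = 0" by (simp add: a_def cntp_zero)
  qed
  have skew: "skew_diagram lam mu = DD"
    unfolding skew_diagram_def SL SM DD_def by auto
  have "fcoef lam mu (content DD (Ttab DD)) = card FS"
    unfolding fcoef_def FS_def skew by simp
  then show ?thesis using main_loc unfolding skew LL_def by simp
qed


end
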